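(* For a finite-space SSP game (as in the context) satisfying the Finite-Space SSP Game Model Assumption, there exist $(\mu^*,\nu^* )\in\Pi_{1,SR}\times\Pi_{2,SR}$ such that $J(i;\mu^*,\pi_2)\le J(i;\mu^*,\nu^* )\le J(i;\pi_1,\nu^* )$ for all $\pi_1\in\Pi_1$, $\pi_2\in\Pi_2$, $i\in S$. The value function of the game, $J^*(\cdot)=J(\cdot;\mu^*,\nu^* )$, is the unique solution of $J=TJ$. Moreover, any $\mu^*\in\Pi_{1,SR}$, $\nu^*\in\Pi_{2,SR}$ with $T_{\mu^*}J^*=TJ^*$ and $\tilde T_{\nu^*}J^*=TJ^*$ are optimal policies of player I and player II respectively, are essentially proper, and the pair $(\mu^*,\nu^* )$ is a non-prolonging pair of equilibrium policies.
   Context: Finite-space game: $S=\{1,\dots,n\}$, $S_o=S\cup\{0\}$, $0$ absorbing cost-free termination state. At $i\in S$, players I and II have finite control sets $U(i)$, $V(i)$. Under $(u,v)$ the state moves to $j\in S_o$ w.p. $p_{ij}(u,v)$ with transition cost $\hat g(i,u,v,j)$ (paid by player I to player II); $g(i,u,v)$ is the expected one-stage cost. $\Pi_1,\Pi_2$: history-dependent randomized policies (based on past states and both players' past controls). $J(i;\pi_1,\pi_2)=\liminf_{t\to\infty}E_{\pi_1\pi_2}[\sum_{k=0}^t\hat g(i_k,u_k,v_k,i_{k+1})\mid i_0=i]$. Player I minimizes $\sup_{\pi_2}J(i;\pi_1,\pi_2)$, player II maximizes $\inf_{\pi_1}J(i;\pi_1,\pi_2)$. $\bar U(i)=\mathcal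 P(U(i))$, $\bar V(i)=\mathcal P(V(i))$ (probability distributions). $\Pi_{1,SR}$ ($\Pi_{2,SR}$): stationary randomized policies $\mu=\{\mu(\cdot\mid i)\in\bar U(i)\}$ ($\nu=\{\nu(\cdot\mid i)\in\bar V(i)\}$). Operators on $\mathbb{R}^n$: $(TJ)(i)=\inf_{\rho\in\bar U(i)}\sup_{\sigma\in\bar V(i)}\sum_{u,v}\rho(u)\sigma(v)\big(g(i,u,v)+\sum_{j\in S}p_{ij}(u,v)J(j)\big)$; $(T_\mu J)(i)$ is the same with $\rho$ fixed to $\mu(\cdot\mid i)$ (sup over $\sigma$ only); $(\tilde T_\nu J)(i)$ is the same with $\sigma$ fixed to $\nu(\cdot\mid i)$ (inf over $\rho$ only). A pair of policies is prolonging if for some initial state the termination state is with positive probability never reached; otherwise non-prolonging. $\mu\in\Pi_{1,SR}$ is essentially proper if some $\nu\in\Pi_{2,SR}$ makes $(\mu,\nu)$ non-prolonging and every $\nu\in\Pi_{2,SR}$ with $(\mu,\nu)$ prolonging has $J(i;\mu,\nu)=-\infty$ for some $i$; $\nu\in\Pi_{2,SR}$ is essentially proper if some $\mu\in\Pi_{1,SR}$ makes $(\mu,\nu)$ non-prolonging and every $\mu$ with $(\mu,\nu)$ prolonging has $J(i;\mu,\nu)=+\infty$ for some $i$. Finite-Space SSP Game Model Assumption: (i) there is $\bar\mu\in\Pi_{1,SR}$ with $J(i;\bar\mu,\nu)<+\infty$ for all $\nu\in\Pi_{2,SR}$, all $i$; (ii) there is $\bar\nu\in\Pi_{2,SR}$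 with $J(i;\mu,\bar\nu)>-\infty$ for all $\mu\in\Pi_{1,SR}$, all $i$; (iii) every prolonging pair in $\Pi_{1,SR}\times\Pi_{2,SR}$ has $J(i;\mu,\nu)\in\{+\infty,-\infty\}$ for some $i$. *)

theory Defs
  imports "HOL-Probability.Probability"
begin

text \<open>States are natural numbers:
  S = {1..n}, the termination state is 0.  Controls of players I and II live in
  the types 'u and 'v, with admissible finite sets U(i), V(i).\<close>

record ('u,'v) ssp_game =
  nS :: nat
  Uc :: "nat \<Rightarrow> 'u set"
  Vc :: "nat \<Rightarrow> 'v set"
  tp :: "nat \<Rightarrow> 'u \<Rightarrow> 'v \<Rightarrow> nat \<Rightarrow> real"   (* p_ij(u,v) as tp i u v j *)
  tc :: "nat \<Rightarrow> 'u \<Rightarrow> 'v \<Rightarrow> nat \<Rightarrow> real"   (* \<hat>g(i,u,v,j) as tc i u v j *)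

definition St :: "('u,'v) ssp_game \<Rightarrow> nat set" where
  "St G = {1..nS G}"

definition So :: "('u,'v) ssp_game \<Rightarrow> nat set" where
  "So G = {0..nS G}"

definition wf_game :: "('u,'v) ssp_game \<Rightarrow> bool" where
  "wf_game G \<longleftrightarrow>
     (\<forall>i\<in>St G. finite (Uc G i) \<and> Uc G i \<noteq> {} \<and> finite (Vc G i) \<and> Vc G i \<noteq> {} \<and>
        (\<forall>u\<in>Uc G i. \<forall>v\<in>Vc G i.
            (\<forall>j\<in>So G. tp G i u v j \<ge> 0) \<and> (\<Sum>j\<in>So G. tp G i u v j) = 1))"

definition gcost :: "('u,'v) ssp_game \<Rightarrow> nat \<Rightarrow> 'u \<Rightarrow> 'v \<Rightarrow> real" where
  "gcost G i u v = (\<Sum>j\<in>So G. tp G i u v j * tc G i u v j)"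

text \<open>Histories: past states with both players' past controls (the current state is
  passed separately).\<close>
type_synonym ('u,'v) hist = "(nat \<times> 'u \<times> 'v) list"

definition Pol1 :: "('u,'v) ssp_game \<Rightarrow> (('u,'v) hist \<Rightarrow> nat \<Rightarrow> 'u pmf) set" where
  "Pol1 G = {\<pi>. \<forall>h. \<forall>i\<in>St G. set_pmf (\<pi> h i) \<subseteq> Uc G i}"

definition Pol2 :: "('u,'v) ssp_game \<Rightarrow> (('u,'v) hist \<Rightarrow> nat \<Rightarrow> 'v pmf) set" where
  "Pol2 G = {\<pi>. \<forall>h. \<forall>i\<in>St G. set_pmf (\<pi> h i) \<subseteq> Vc G i}"

definition SR1 :: "('u,'v) ssp_game \<Rightarrow> (nat \<Rightarrow> 'u pmf) set" where
  "SR1 G = {\<mu>. \<forall>i\<in>St G. set_pmf (\<mu> i) \<subseteq> Uc G i}"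

definition SR2 :: "('u,'v) ssp_game \<Rightarrow> (nat \<Rightarrow> 'v pmf) set" where
  "SR2 G = {\<nu>. \<forall>i\<in>St G. set_pmf (\<nu> i) \<subseteq> Vc G i}"

definition stat :: "(nat \<Rightarrow> 'a pmf) \<Rightarrow> ('u,'v) hist \<Rightarrow> nat \<Rightarrow> 'a pmf" where
  "stat \<mu> = (\<lambda>h i. \<mu> i)"

text \<open>State 0 is absorbing and cost-free.
  Hence E[\<Sum>k=0..t. \<hat>g(i_k,u_k,v_k,i_{k+1}) | i_0 = i] = costN G \<pi>1 \<pi>2 (Suc t) [] i.\<close>
primrec costN :: "('u,'v) ssp_game \<Rightarrow> (('u,'v) hist \<Rightarrow> nat \<Rightarrow> 'u pmf) \<Rightarrow>
    (('u,'v) hist \<Rightarrow> nat \<Rightarrow> 'v pmf) \<Rightarrow> nat \<Rightarrow> ('u,'v) hist \<Rightarrow> nat \<Rightarrow> real" where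
  "costN G \<pi>1 \<pi>2 0 h i = 0"
| "costN G \<pi>1 \<pi>2 (Suc m) h i =
     (if i = 0 then 0 else
       (\<Sum>u\<in>Uc G i. \<Sum>v\<in>Vc G i. pmf (\<pi>1 h i) u * pmf (\<pi>2 h i) v *
          (\<Sum>j\<in>So G. tp G i u v j * (tc G i u v j + costN G \<pi>1 \<pi>2 m (h @ [(i,u,v)]) j))))"

primrec survN :: "('u,'v) ssp_game \<Rightarrow> (('u,'v) hist \<Rightarrow> nat \<Rightarrow> 'u pmf) \<Rightarrow>
    (('u,'v) hist \<Rightarrow> nat \<Rightarrow> 'v pmf) \<Rightarrow> nat \<Rightarrow> ('u,'v) hist \<Rightarrow> nat \<Rightarrow> real" where
  "survN G \<pi>1 \<pi>2 0 h i = (if i = 0 then 0 else 1)"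
| "survN G \<pi>1 \<pi>2 (Suc m) h i =
     (if i = 0 then 0 else
       (\<Sum>u\<in>Uc G i. \<Sum>v\<in>Vc G i. pmf (\<pi>1 h i) u * pmf (\<pi>2 h i) v *
          (\<Sum>j\<in>So G. tp G i u v j * survN G \<pi>1 \<pi>2 m (h @ [(i,u,v)]) j)))"

definition Jc :: "('u,'v) ssp_game \<Rightarrow> (('u,'v) hist \<Rightarrow> nat \<Rightarrow> 'u pmf) \<Rightarrow>
    (('u,'v) hist \<Rightarrow> nat \<Rightarrow> 'v pmf) \<Rightarrow> nat \<Rightarrow> ereal" where
  "Jc G \<pi>1 \<pi>2 i = liminf (\<lambda>t. ereal (costN G \<pi>1 \<pi>2 (Suc t) [] i))"

text \<open>Since 0 is absorbing, the events {i_t \<noteq> 0} decrease, and the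
  probability of never reaching 0 is the limit (= infimum) of their probabilities.\<close>
definition prolonging :: "('u,'v) ssp_game \<Rightarrow> (('u,'v) hist \<Rightarrow> nat \<Rightarrow> 'u pmf) \<Rightarrow>
    (('u,'v) hist \<Rightarrow> nat \<Rightarrow> 'v pmf) \<Rightarrow> bool" where
  "prolonging G \<pi>1 \<pi>2 \<longleftrightarrow> (\<exists>i\<in>St G. (INF t. survN G \<pi>1 \<pi>2 t [] i) > 0)"

definition ess_proper1 :: "('u,'v) ssp_game \<Rightarrow> (nat \<Rightarrow> 'u pmf) \<Rightarrow> bool" where
  "ess_proper1 G \<mu> \<longleftrightarrow> \<mu> \<in> SR1 G \<and>
     (\<exists>\<nu>\<in>SR2 G. \<not> prolonging G (stat \<mu>) (stat \<nu>)) \<and>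
     (\<forall>\<nu>\<in>SR2 G. prolonging G (stat \<mu>) (stat \<nu>) \<longrightarrow>
         (\<exists>i\<in>St G. Jc G (stat \<mu>) (stat \<nu>) i = -\<infinity>))"

definition ess_proper2 :: "('u,'v) ssp_game \<Rightarrow> (nat \<Rightarrow> 'v pmf) \<Rightarrow> bool" where
  "ess_proper2 G \<nu> \<longleftrightarrow> \<nu> \<in> SR2 G \<and>
     (\<exists>\<mu>\<in>SR1 G. \<not> prolonging G (stat \<mu>) (stat \<nu>)) \<and>
     (\<forall>\<mu>\<in>SR1 G. prolonging G (stat \<mu>) (stat \<nu>) \<longrightarrow>
         (\<exists>i\<in>St G. Jc G (stat \<mu>) (stat \<nu>) i = \<infinity>))"

definition ssp_model_assumption :: "('u,'v) ssp_game \<Rightarrow> bool" where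
  "ssp_model_assumption G \<longleftrightarrow>
     (\<exists>\<mu>\<in>SR1 G. \<forall>\<nu>\<in>SR2 G. \<forall>i\<in>St G. Jc G (stat \<mu>) (stat \<nu>) i < \<infinity>) \<and>
     (\<exists>\<nu>\<in>SR2 G. \<forall>\<mu>\<in>SR1 G. \<forall>i\<in>St G. Jc G (stat \<mu>) (stat \<nu>) i > -\<infinity>) \<and>
     (\<forall>\<mu>\<in>SR1 G. \<forall>\<nu>\<in>SR2 G. prolonging G (stat \<mu>) (stat \<nu>) \<longrightarrow>
         (\<exists>i\<in>St G. Jc G (stat \<mu>) (stat \<nu>) i \<in> {\<infinity>, -\<infinity>}))"

text \<open>Operators T, T_\<mu>, \<tilde>T_\<nu> on real vectors (only the values on S matter).\<close>
definition Ubar :: "('u,'v) ssp_game \<Rightarrow> nat \<Rightarrow> 'u pmf set" where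
  "Ubar G i = {\<rho>. set_pmf \<rho> \<subseteq> Uc G i}"

definition Vbar :: "('u,'v) ssp_game \<Rightarrow> nat \<Rightarrow> 'v pmf set" where
  "Vbar G i = {\<sigma>. set_pmf \<sigma> \<subseteq> Vc G i}"

definition Qval :: "('u,'v) ssp_game \<Rightarrow> (nat \<Rightarrow> real) \<Rightarrow> nat \<Rightarrow> 'u pmf \<Rightarrow> 'v pmf \<Rightarrow> real" where
  "Qval G J i \<rho> \<sigma> = (\<Sum>u\<in>Uc G i. \<Sum>v\<in>Vc G i. pmf \<rho> u * pmf \<sigma> v *
       (gcost G i u v + (\<Sum>j\<in>St G. tp G i u v j * J j)))"

definition Top :: "('u,'v) ssp_game \<Rightarrow> (nat \<Rightarrow> real) \<Rightarrow> nat \<Rightarrow> real" where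
  "Top G J i = (INF \<rho>\<in>Ubar G i. SUP \<sigma>\<in>Vbar G i. Qval G J i \<rho> \<sigma>)"

definition Tmu :: "('u,'v) ssp_game \<Rightarrow> (nat \<Rightarrow> 'u pmf) \<Rightarrow> (nat \<Rightarrow> real) \<Rightarrow> nat \<Rightarrow> real" where
  "Tmu G \<mu> J i = (SUP \<sigma>\<in>Vbar G i. Qval G J i (\<mu> i) \<sigma>)"

definition Tnu :: "('u,'v) ssp_game \<Rightarrow> (nat \<Rightarrow> 'v pmf) \<Rightarrow> (nat \<Rightarrow> real) \<Rightarrow> nat \<Rightarrow> real" where
  "Tnu G \<nu> J i = (INF \<rho>\<in>Ubar G i. Qval G J i \<rho> (\<nu> i))"

definition equilibrium :: "('u,'v) ssp_game \<Rightarrow> (('u,'v) hist \<Rightarrow> nat \<Rightarrow> 'u pmf) \<Rightarrow>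
    (('u,'v) hist \<Rightarrow> nat \<Rightarrow> 'v pmf) \<Rightarrow> bool" where
  "equilibrium G \<pi>1 \<pi>2 \<longleftrightarrow>
     (\<forall>\<pi>1'\<in>Pol1 G. \<forall>\<pi>2'\<in>Pol2 G. \<forall>i\<in>St G.
        Jc G \<pi>1 \<pi>2' i \<le> Jc G \<pi>1 \<pi>2 i \<and> Jc G \<pi>1 \<pi>2 i \<le> Jc G \<pi>1' \<pi>2 i)"

definition optimal1 :: "('u,'v) ssp_game \<Rightarrow> (('u,'v) hist \<Rightarrow> nat \<Rightarrow> 'u pmf) \<Rightarrow> bool" where
  "optimal1 G \<pi>1 \<longleftrightarrow> (\<forall>i\<in>St G.
     (SUP \<pi>2\<in>Pol2 G. Jc G \<pi>1 \<pi>2 i) = (INF \<pi>1'\<in>Pol1 G. SUP \<pi>2\<in>Pol2 G. Jc G \<pi>1' \<pi>2 i))"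

definition optimal2 :: "('u,'v) ssp_game \<Rightarrow> (('u,'v) hist \<Rightarrow> nat \<Rightarrow> 'v pmf) \<Rightarrow> bool" where
  "optimal2 G \<pi>2 \<longleftrightarrow> (\<forall>i\<in>St G.
     (INF \<pi>1\<in>Pol1 G. Jc G \<pi>1 \<pi>2 i) = (SUP \<pi>2'\<in>Pol2 G. INF \<pi>1\<in>Pol1 G. Jc G \<pi>1 \<pi>2' i))"

end

theory Submission
  imports Defs
begin


definition smono :: "nat set \<Rightarrow> ((nat \<Rightarrow> real) \<Rightarrow> nat \<Rightarrow> real) \<Rightarrow> bool" where
  "smono S F \<longleftrightarrow> (\<forall>J J'. (\<forall>j\<in>S. J j \<le> J' j) \<longrightarrow> (\<forall>i\<in>S. F J i \<le> F J' i))"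

lemma smonoD: "smono S F \<Longrightarrow> (\<And>j. j\<in>S \<Longrightarrow> J j \<le> J' j) \<Longrightarrow> i\<in>S \<Longrightarrow> F J i \<le> F J' i"
  unfolding smono_def by blast

lemma smono_local: "smono S F \<Longrightarrow> (\<And>j. j\<in>S \<Longrightarrow> J j = J' j) \<Longrightarrow> i\<in>S \<Longrightarrow> F J i = F J' i"
  by (rule antisym; erule smonoD; simp)

lemma smono_iter: "smono S F \<Longrightarrow> (\<And>j. j\<in>S \<Longrightarrow> J j \<le> J' j) \<Longrightarrow> i\<in>S \<Longrightarrow> (F^^k) J i \<le> (F^^k) J' i"
proof (induction k arbitrary: i)
  case 0 then show ?case by simp
next
  case (Suc k) then show ?case by (simp add: smonoD)
qed

lemma smono_iter_le: assumes "smono S F" "\<And>i. i\<in>S \<Longrightarrow> F J i \<le> J i" "i\<in>S"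
  shows "(F^^k) J i \<le> J i"
  using assms(3)
proof (induction k arbitrary: i)
  case 0 then show ?case by simp
next
  case (Suc k)
  have "(F^^Suc k) J i = F ((F^^k) J) i" by simp
  also have "\<dots> \<le> F J i" by (rule smonoD[OF assms(1) Suc.IH Suc.prems])
  also have "\<dots> \<le> J i" using assms(2) Suc.prems by simp
  finally show ?case .
qed

lemma smono_iter_ge: assumes "smono S F" "\<And>i. i\<in>S \<Longrightarrow> J i \<le> F J i" "i\<in>S"
  shows "J i \<le> (F^^k) J i"
  using assms(3)
proof (induction k arbitrary: i)
  case 0 then show ?case by simp
next
  case (Suc k)
  have "J i \<le> F J i" using assms(2) Suc.prems by simp
  also have "\<dots> \<le> F ((F^^k) J) i" by (rule smonoD[OF assms(1) Suc.IH Suc.prems])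
  finally show ?case by simp
qed

lemma smono_iter_dec: assumes "smono S F" "\<And>i. i\<in>S \<Longrightarrow> F J i \<le> J i" "i\<in>S"
  shows "(F^^Suc k) J i \<le> (F^^k) J i"
proof -
  have "(F^^Suc k) J = (F^^k) (F J)" by (simp add: funpow_Suc_right del: funpow.simps)
  then show ?thesis using smono_iter[OF assms(1) assms(2) assms(3)] by simp
qed

lemma smono_iter_inc: assumes "smono S F" "\<And>i. i\<in>S \<Longrightarrow> J i \<le> F J i" "i\<in>S"
  shows "(F^^k) J i \<le> (F^^Suc k) J i"
proof -
  have "(F^^Suc k) J = (F^^k) (F J)" by (simp add: funpow_Suc_right del: funpow.simps)
  then show ?thesis using smono_iter[OF assms(1) assms(2) assms(3)] by simp
qed

lemma smono_fix: assumes "smono S F" "\<And>i. i\<in>S \<Longrightarrow> F J i = J i" "i\<in>S"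
  shows "(F^^k) J i = J i"
  using smono_iter_le[OF assms(1) _ assms(3), where J=J and k=k] smono_iter_ge[OF assms(1) _ assms(3), where J=J and k=k] assms(2)
  by force

lemma iter_neg:
  assumes "smono S H" "\<And>J i. i\<in>S \<Longrightarrow> F J i = - H (\<lambda>j. - J j) i" "i\<in>S"
  shows "(F^^k) J i = - (H^^k) (\<lambda>j. - J j) i"
  using assms(3)
proof (induction k arbitrary: i)
  case 0 then show ?case by simp
next
  case (Suc k)
  have "(F^^Suc k) J i = - H (\<lambda>j. - (F^^k) J j) i" using assms(2) Suc.prems by simp
  also have "H (\<lambda>j. - (F^^k) J j) i = H ((H^^k) (\<lambda>j. - J j)) i"
    by (rule smono_local[OF assms(1) _ Suc.prems]) (simp add: Suc.IH)
  finally show ?case by simp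
qed

definition Pop :: "nat set \<Rightarrow> (nat \<Rightarrow> nat \<Rightarrow> real) \<Rightarrow> (nat \<Rightarrow> real) \<Rightarrow> nat \<Rightarrow> real" where
  "Pop S q f = (\<lambda>i. \<Sum>j\<in>S. q i j * f j)"

definition Lop :: "nat set \<Rightarrow> (nat \<Rightarrow> nat \<Rightarrow> real) \<Rightarrow> (nat \<Rightarrow> real) \<Rightarrow> (nat \<Rightarrow> real) \<Rightarrow> nat \<Rightarrow> real" where
  "Lop S q c f = (\<lambda>i. c i + (\<Sum>j\<in>S. q i j * f j))"

definition kern :: "nat set \<Rightarrow> (nat \<Rightarrow> nat \<Rightarrow> real) \<Rightarrow> bool" where
  "kern S q \<longleftrightarrow> finite S \<and> (\<forall>i\<in>S. \<forall>j\<in>S. 0 \<le> q i j) \<and> (\<forall>i\<in>S. (\<Sum>j\<in>S. q i j) \<le> 1)"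

lemma Pop_smono: "kern S q \<Longrightarrow> smono S (Pop S q)"
  unfolding smono_def kern_def Pop_def by (auto intro!: sum_mono mult_left_mono)

lemma Lop_smono: "kern S q \<Longrightarrow> smono S (Lop S q c)"
  unfolding smono_def kern_def Lop_def by (auto intro!: sum_mono mult_left_mono)

lemma Pop_iter_scale: "(Pop S q ^^ k) (\<lambda>j. a * f j) i = a * (Pop S q ^^ k) f i"
proof (induction k arbitrary: i)
  case 0 then show ?case by simp
next
  case (Suc k) then show ?case by (simp add: Pop_def sum_distrib_left algebra_simps)
qed

lemma Pop_iter_const: "(Pop S q ^^ k) (\<lambda>j. a) i = a * (Pop S q ^^ k) (\<lambda>_. 1) i"
  using Pop_iter_scale[where S=S and q=q and k=k and a=a and f="\<lambda>_. 1" and i=i] by simp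

lemma Lop_iter_split: "(Lop S q c ^^ k) f i = (Lop S q c ^^ k) (\<lambda>_. 0) i + (Pop S q ^^ k) f i"
proof (induction k arbitrary: i)
  case 0 then show ?case by simp
next
  case (Suc k) then show ?case by (simp add: Pop_def Lop_def sum.distrib algebra_simps)
qed

definition surv :: "nat set \<Rightarrow> (nat \<Rightarrow> nat \<Rightarrow> real) \<Rightarrow> nat \<Rightarrow> nat \<Rightarrow> real" where
  "surv S q k = (Pop S q ^^ k) (\<lambda>_. 1)"

lemma surv_nonneg: "kern S q \<Longrightarrow> i\<in>S \<Longrightarrow> 0 \<le> surv S q k i"
proof -
  assume a: "kern S q" "i\<in>S"
  have "(Pop S q ^^ k) (\<lambda>_. 0) i \<le> (Pop S q ^^ k) (\<lambda>_. 1) i"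
    by (rule smono_iter[OF Pop_smono[OF a(1)] _ a(2)]) simp
  then show ?thesis using Pop_iter_const[where S=S and q=q and k=k and a=0 and i=i] by (simp add: surv_def)
qed

lemma surv_le1: "kern S q \<Longrightarrow> i\<in>S \<Longrightarrow> surv S q k i \<le> 1"
  unfolding surv_def
  by (rule smono_iter_le[OF Pop_smono]) (auto simp: kern_def Pop_def)

lemma surv_dec: "kern S q \<Longrightarrow> i\<in>S \<Longrightarrow> surv S q (Suc k) i \<le> surv S q k i"
  unfolding surv_def
  by (rule smono_iter_dec[OF Pop_smono]) (auto simp: kern_def Pop_def)

lemma surv_antimono: assumes "kern S q" "i\<in>S" "k \<le> k'" shows "surv S q k' i \<le> surv S q k i"
proof -
  have "antimono_on UNIV (\<lambda>k. surv S q k i)" by (rule decseq_SucI) (rule surv_dec[OF assms(1,2)])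
  then show ?thesis using assms(3) by (simp add: monotone_on_def)
qed

lemma Pop_iter_bound:
  assumes "kern S q" "\<And>j. j\<in>S \<Longrightarrow> \<bar>f j\<bar> \<le> B" "i\<in>S"
  shows "\<bar>(Pop S q ^^ k) f i\<bar> \<le> B * surv S q k i"
proof -
  have "(Pop S q ^^ k) f i \<le> (Pop S q ^^ k) (\<lambda>_. B) i"
    by (rule smono_iter[OF Pop_smono[OF assms(1)] _ assms(3)]) (use assms(2) in force)
  moreover have "(Pop S q ^^ k) (\<lambda>_. - B) i \<le> (Pop S q ^^ k) f i"
    by (rule smono_iter[OF Pop_smono[OF assms(1)] _ assms(3)]) (use assms(2) in force)
  ultimately show ?thesis
    using Pop_iter_const[where S=S and q=q and k=k and a=B and i=i] Pop_iter_const[where S=S and q=q and k=k and a="-B" and i=i] by (simp add: surv_def)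
qed

lemma Pop_iter_bound1:
  assumes "kern S q" "\<And>j. j\<in>S \<Longrightarrow> \<bar>f j\<bar> \<le> B" "i\<in>S"
  shows "\<bar>(Pop S q ^^ k) f i\<bar> \<le> B"
proof -
  have "0 \<le> B" if "S \<noteq> {}" using that assms(2) by (meson abs_ge_zero all_not_in_conv order_trans)
  moreover have "S \<noteq> {}" using assms(3) by auto
  ultimately show ?thesis
    using Pop_iter_bound[OF assms] surv_le1[OF assms(1,3), of k] surv_nonneg[OF assms(1,3), of k]
    by (meson mult_left_le order_trans)
qed

lemma chain_bdd_above:
  assumes "kern S q" "\<And>i. i\<in>S \<Longrightarrow> Lop S q c f i \<le> f i"
  shows "\<exists>B. \<forall>k. \<forall>i\<in>S. (Lop S q c ^^ k) (\<lambda>_. 0) i \<le> f i + B"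
proof (intro exI allI ballI)
  fix k i assume i: "i\<in>S"
  have "(Lop S q c ^^ k) f i \<le> f i" by (rule smono_iter_le[OF Lop_smono[OF assms(1)] assms(2) i])
  moreover have "\<bar>(Pop S q ^^ k) f i\<bar> \<le> (\<Sum>j\<in>S. \<bar>f j\<bar>)"
    by (rule Pop_iter_bound1[OF assms(1) _ i]) (use assms(1) in \<open>auto simp: kern_def intro: member_le_sum\<close>)
  ultimately show "(Lop S q c ^^ k) (\<lambda>_. 0) i \<le> f i + (\<Sum>j\<in>S. \<bar>f j\<bar>)"
    using Lop_iter_split[where S=S and q=q and c=c and k=k and f=f and i=i] by linarith
qed

lemma chain_bdd_below:
  assumes "kern S q" "\<And>i. i\<in>S \<Longrightarrow> f i \<le> Lop S q c f i"
  shows "\<exists>B. \<forall>k. \<forall>i\<in>S. f i - B \<le> (Lop S q c ^^ k) (\<lambda>_. 0) i"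
proof (intro exI allI ballI)
  fix k i assume i: "i\<in>S"
  have "f i \<le> (Lop S q c ^^ k) f i" by (rule smono_iter_ge[OF Lop_smono[OF assms(1)] assms(2) i])
  moreover have "\<bar>(Pop S q ^^ k) f i\<bar> \<le> (\<Sum>j\<in>S. \<bar>f j\<bar>)"
    by (rule Pop_iter_bound1[OF assms(1) _ i]) (use assms(1) in \<open>auto simp: kern_def intro: member_le_sum\<close>)
  ultimately show "f i - (\<Sum>j\<in>S. \<bar>f j\<bar>) \<le> (Lop S q c ^^ k) (\<lambda>_. 0) i"
    using Lop_iter_split[where S=S and q=q and c=c and k=k and f=f and i=i] by linarith
qed


lemma surv_geom:
  assumes k: "kern S q" and inf: "\<forall>i\<in>S. (INF k. surv S q k i) \<le> 0"
  shows "\<exists>\<theta>::real. 0 \<le> \<theta> \<and> \<theta> < 1 \<and> (\<forall>i\<in>S. \<forall>k. surv S q k i \<le> 2 * \<theta>^k)"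
proof -
  have "\<exists>k. surv S q k i < 1/2" if i: "i\<in>S" for i
  proof -
    have bdd: "bdd_below (range (\<lambda>k. surv S q k i))"
      unfolding bdd_below_def using surv_nonneg[OF k i] by auto
    have "(INF k. surv S q k i) < 1/2" using inf i by force
    then show ?thesis using cINF_less_iff[OF _ bdd, of "1/2"] by simp
  qed
  then obtain kf where kf: "\<forall>i\<in>S. surv S q (kf i) i < 1/2" by metis
  define K where "K = Suc (\<Sum>i\<in>S. kf i)"
  have fin: "finite S" using k by (simp add: kern_def)
  have K: "\<forall>i\<in>S. surv S q K i \<le> 1/2"
  proof
    fix i assume i: "i\<in>S"
    have "kf i \<le> K" unfolding K_def using member_le_sum[OF i, of kf] fin by simp
    then show "surv S q K i \<le> 1/2" using surv_antimono[OF k i] kf i by (meson less_eq_real_def order_trans)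
  qed
  have step: "surv S q (k + K) i \<le> 1/2 * surv S q k i" if i: "i\<in>S" for k i
  proof -
    have "surv S q (k + K) i = (Pop S q ^^ k) (surv S q K) i"
      by (simp add: surv_def funpow_add)
    also have "\<dots> \<le> (Pop S q ^^ k) (\<lambda>_. 1/2) i"
      by (rule smono_iter[OF Pop_smono[OF k] _ i]) (use K in auto)
    also have "\<dots> = 1/2 * surv S q k i"
      using Pop_iter_const[where S=S and q=q and k=k and a="1/2" and i=i] by (simp add: surv_def)
    finally show ?thesis .
  qed
  have mstep: "surv S q (k + m * K) i \<le> (1/2)^m" if i: "i\<in>S" for k m i
  proof (induction m)
    case 0 then show ?case using surv_le1[OF k i] by simp
  next
    case (Suc m)
    have "surv S q (k + Suc m * K) i = surv S q ((k + m*K) + K) i" by (simp add: algebra_simps)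
    also have "\<dots> \<le> 1/2 * surv S q (k + m*K) i" by (rule step[OF i])
    also have "\<dots> \<le> 1/2 * (1/2)^m" using Suc.IH by simp
    finally show ?case by simp
  qed
  define \<theta> where "\<theta> = root K (1/2)"
  have Kpos: "0 < K" by (simp add: K_def)
  have th0: "0 < \<theta>" unfolding \<theta>_def using Kpos by simp
  have th1: "\<theta> < 1" unfolding \<theta>_def using Kpos by (simp add: real_root_lt_1_iff)
  have thK: "\<theta>^K = 1/2" unfolding \<theta>_def using Kpos real_root_pow_pos by simp
  have "surv S q k i \<le> 2 * \<theta>^k" if i: "i\<in>S" for k i
  proof -
    have kk: "k = k mod K + (k div K) * K" by simp
    have "surv S q k i \<le> (1/2)^(k div K)" using mstep[OF i, of "k mod K" "k div K"] kk by simp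
    also have "(1/2::real)^(k div K) = (\<theta>^K)^(k div K)" by (simp only: thK)
    also have "\<dots> \<le> 2 * \<theta>^k"
    proof -
      have "\<theta>^(k mod K) * (\<theta>^K)^(k div K) = \<theta>^(k mod K + K * (k div K))"
        by (metis power_add power_mult)
      then have "\<theta>^k = \<theta>^(k mod K) * (\<theta>^K)^(k div K)" by simp
      moreover have "\<theta>^K \<le> \<theta>^(k mod K)"
        using th0 th1 Kpos by (intro power_decreasing) (auto intro: less_imp_le)
      moreover have "0 \<le> (\<theta>^K)^(k div K)" using th0 by simp
      ultimately have "\<theta>^K * (\<theta>^K)^(k div K) \<le> \<theta>^k" by (simp add: mult_right_mono)
      then show ?thesis by (simp only: thK)
    qed
    finally show ?thesis .
  qed
  then show ?thesis using th0 th1 by (intro exI[of _ \<theta>]) auto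
qed

lemma Lop_iter_zero: "(Lop S q c ^^ k) (\<lambda>_. 0) i = (\<Sum>m<k. (Pop S q ^^ m) c i)"
proof (induction k arbitrary: i)
  case 0 then show ?case by simp
next
  case (Suc k)
  have "(Lop S q c ^^ Suc k) (\<lambda>_. 0) i = c i + (\<Sum>j\<in>S. q i j * (\<Sum>m<k. (Pop S q ^^ m) c j))"
    by (simp add: Lop_def Suc.IH)
  also have "\<dots> = c i + (\<Sum>m<k. (Pop S q ^^ Suc m) c i)"
    by (simp add: Pop_def sum_distrib_left sum.swap[of _ S])
  also have "\<dots> = (Pop S q ^^ 0) c i + (\<Sum>m<k. (Pop S q ^^ Suc m) c i)" by simp
  also have "\<dots> = (\<Sum>m<Suc k. (Pop S q ^^ m) c i)"
    by (rule sum.lessThan_Suc_shift[symmetric])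
  finally show ?case .
qed

lemma chain_conv:
  assumes k: "kern S q" and inf: "\<forall>i\<in>S. (INF k. surv S q k i) \<le> 0"
  shows "\<exists>J. (\<forall>i\<in>S. Lop S q c J i = J i) \<and> (\<forall>f. \<forall>i\<in>S. (\<lambda>k. (Lop S q c ^^ k) f i) \<longlonglongrightarrow> J i)"
proof -
  obtain \<theta> :: real where th: "0 \<le> \<theta>" "\<theta> < 1" and sb: "\<forall>i\<in>S. \<forall>k. surv S q k i \<le> 2 * \<theta>^k"
    using surv_geom[OF k inf] by blast
  have fin: "finite S" using k by (simp add: kern_def)
  have bnd: "\<bar>(Pop S q ^^ m) f i\<bar> \<le> (\<Sum>j\<in>S. \<bar>f j\<bar>) * (2 * \<theta>^m)" if i: "i\<in>S" for f m i
  proof -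
    have "\<bar>(Pop S q ^^ m) f i\<bar> \<le> (\<Sum>j\<in>S. \<bar>f j\<bar>) * surv S q m i"
      by (rule Pop_iter_bound[OF k _ i]) (use fin in \<open>auto intro: member_le_sum\<close>)
    also have "\<dots> \<le> (\<Sum>j\<in>S. \<bar>f j\<bar>) * (2 * \<theta>^m)"
      using sb i by (intro mult_left_mono) (auto intro: sum_nonneg)
    finally show ?thesis .
  qed
  have tz: "(\<lambda>m. (Pop S q ^^ m) f i) \<longlonglongrightarrow> 0" if i: "i\<in>S" for f i
  proof (rule Lim_null_comparison)
    show "\<forall>\<^sub>F m in sequentially. norm ((Pop S q ^^ m) f i) \<le> (\<Sum>j\<in>S. \<bar>f j\<bar>) * (2 * \<theta>^m)"
      using bnd[OF i] by simp
    show "(\<lambda>m. (\<Sum>j\<in>S. \<bar>f j\<bar>) * (2 * \<theta>^m)) \<longlonglongrightarrow> 0"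
      using th by (intro tendsto_mult_right_zero LIMSEQ_power_zero) simp
  qed
  have sm: "summable (\<lambda>m. (Pop S q ^^ m) c i)" if i: "i\<in>S" for i
  proof (rule summable_comparison_test_ev)
    show "\<forall>\<^sub>F m in sequentially. norm ((Pop S q ^^ m) c i) \<le> (\<Sum>j\<in>S. \<bar>c j\<bar>) * (2 * \<theta>^m)"
      using bnd[OF i] by simp
    show "summable (\<lambda>m. (\<Sum>j\<in>S. \<bar>c j\<bar>) * (2 * \<theta>^m))"
      using th by (intro summable_mult summable_geometric) simp
  qed
  define J where "J i = (\<Sum>m. (Pop S q ^^ m) c i)" for i
  have c0: "(\<lambda>k. (Lop S q c ^^ k) (\<lambda>_. 0) i) \<longlonglongrightarrow> J i" if i: "i\<in>S" for i
    unfolding Lop_iter_zero J_def using summable_LIMSEQ[OF sm[OF i]] by simp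
  have conv: "(\<lambda>k. (Lop S q c ^^ k) f i) \<longlonglongrightarrow> J i" if i: "i\<in>S" for f i
    using tendsto_add[OF c0[OF i] tz[OF i, of f]] by (simp add: Lop_iter_split[where f=f])
  have fixp: "Lop S q c J i = J i" if i: "i\<in>S" for i
  proof -
    have "(\<lambda>k. Lop S q c ((Lop S q c ^^ k) (\<lambda>_. 0)) i) \<longlonglongrightarrow> Lop S q c J i"
      unfolding Lop_def by (intro tendsto_intros c0[unfolded Lop_def]) 
    moreover have "(\<lambda>k. Lop S q c ((Lop S q c ^^ k) (\<lambda>_. 0)) i) \<longlonglongrightarrow> J i"
      using LIMSEQ_Suc[OF c0[OF i]] by simp
    ultimately show ?thesis using LIMSEQ_unique by blast
  qed
  show ?thesis using fixp conv by blast
qed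


definition nonexp :: "nat set \<Rightarrow> ((nat \<Rightarrow> real) \<Rightarrow> nat \<Rightarrow> real) \<Rightarrow> bool" where
  "nonexp S F \<longleftrightarrow> (\<forall>J J' e. (\<forall>j\<in>S. \<bar>J j - J' j\<bar> \<le> e) \<longrightarrow> (\<forall>i\<in>S. \<bar>F J i - F J' i\<bar> \<le> e))"

lemma nonexp_cont:
  assumes fin: "finite S" and ne: "nonexp S F" and X: "\<And>j. j\<in>S \<Longrightarrow> (\<lambda>k. X k j) \<longlonglongrightarrow> L j" and i: "i\<in>S"
  shows "(\<lambda>k. F (X k) i) \<longlonglongrightarrow> F L i"
proof -
  have z: "(\<lambda>k. \<Sum>j\<in>S. \<bar>X k j - L j\<bar>) \<longlonglongrightarrow> 0"
  proof -
    have "(\<lambda>k. \<Sum>j\<in>S. \<bar>X k j - L j\<bar>) \<longlonglongrightarrow> (\<Sum>j\<in>S. 0)"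
      by (intro tendsto_sum tendsto_rabs_zero LIM_zero X)
    then show ?thesis by simp
  qed
  have "\<bar>F (X k) i - F L i\<bar> \<le> (\<Sum>j\<in>S. \<bar>X k j - L j\<bar>)" for k
    using ne i fin unfolding nonexp_def
    by (meson member_le_sum abs_ge_zero)
  then have "(\<lambda>k. F (X k) i - F L i) \<longlonglongrightarrow> 0"
    by (intro Lim_null_comparison[OF _ z]) simp
  then show ?thesis by (rule LIM_zero_cancel)
qed

lemma iter_inc_fix:
  assumes fin: "finite S" and m: "smono S F" and ne: "nonexp S F"
    and inc: "\<And>i. i\<in>S \<Longrightarrow> J i \<le> F J i" and ub: "\<And>k i. i\<in>S \<Longrightarrow> (F^^k) J i \<le> U i"
  shows "\<exists>L. (\<forall>i\<in>S. F L i = L i) \<and> (\<forall>i\<in>S. (\<lambda>k. (F^^k) J i) \<longlonglongrightarrow> L i)"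
proof -
  define L where "L j = lim (\<lambda>k. (F^^k) J j)" for j
  have conv: "(\<lambda>k. (F^^k) J j) \<longlonglongrightarrow> L j" if j: "j\<in>S" for j
  proof -
    have "(\<lambda>k. (F^^k) J j) \<longlonglongrightarrow> (SUP k. (F^^k) J j)"
    proof (rule LIMSEQ_incseq_SUP)
      show "bdd_above (range (\<lambda>k. (F^^k) J j))" using ub[OF j] by (auto simp: bdd_above_def)
      show "incseq (\<lambda>k. (F^^k) J j)" using smono_iter_inc[OF m inc j] by (intro incseq_SucI) simp
    qed
    then show ?thesis unfolding L_def by (metis limI)
  qed
  have "F L i = L i" if i: "i\<in>S" for i
  proof -
    have "(\<lambda>k. F ((F^^k) J) i) \<longlonglongrightarrow> F L i" by (rule nonexp_cont[OF fin ne conv i])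
    moreover have "(\<lambda>k. F ((F^^k) J) i) \<longlonglongrightarrow> L i" using LIMSEQ_Suc[OF conv[OF i]] by simp
    ultimately show ?thesis using LIMSEQ_unique by blast
  qed
  then show ?thesis using conv by blast
qed

lemma iter_dec_fix:
  assumes fin: "finite S" and m: "smono S F" and ne: "nonexp S F"
    and dec: "\<And>i. i\<in>S \<Longrightarrow> F J i \<le> J i" and lb: "\<And>k i. i\<in>S \<Longrightarrow> U i \<le> (F^^k) J i"
  shows "\<exists>L. (\<forall>i\<in>S. F L i = L i) \<and> (\<forall>i\<in>S. (\<lambda>k. (F^^k) J i) \<longlonglongrightarrow> L i)"
proof -
  define L where "L j = lim (\<lambda>k. (F^^k) J j)" for j
  have conv: "(\<lambda>k. (F^^k) J j) \<longlonglongrightarrow> L j" if j: "j\<in>S" for j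
  proof -
    have "(\<lambda>k. (F^^k) J j) \<longlonglongrightarrow> (INF k. (F^^k) J j)"
    proof (rule LIMSEQ_decseq_INF)
      show "bdd_below (range (\<lambda>k. (F^^k) J j))" using lb[OF j] by (auto simp: bdd_below_def)
      show "antimono_on UNIV (\<lambda>k. (F^^k) J j)" using smono_iter_dec[OF m dec j] by (intro decseq_SucI) simp
    qed
    then show ?thesis unfolding L_def by (metis limI)
  qed
  have "F L i = L i" if i: "i\<in>S" for i
  proof -
    have "(\<lambda>k. F ((F^^k) J) i) \<longlonglongrightarrow> F L i" by (rule nonexp_cont[OF fin ne conv i])
    moreover have "(\<lambda>k. F ((F^^k) J) i) \<longlonglongrightarrow> L i" using LIMSEQ_Suc[OF conv[OF i]] by simp
    ultimately show ?thesis using LIMSEQ_unique by blast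
  qed
  then show ?thesis using conv by blast
qed

lemma iter_le_iter:
  assumes m: "smono S F" and le: "\<And>J i. i\<in>S \<Longrightarrow> G J i \<le> F J i" and i: "i\<in>S"
  shows "(G^^k) J i \<le> (F^^k) J i"
  using i
proof (induction k arbitrary: i)
  case 0 then show ?case by simp
next
  case (Suc k)
  have "(G^^Suc k) J i = G ((G^^k) J) i" by simp
  also have "\<dots> \<le> F ((G^^k) J) i" by (rule le[OF Suc.prems])
  also have "\<dots> \<le> F ((F^^k) J) i" by (rule smonoD[OF m Suc.IH Suc.prems])
  finally show ?case by simp
qed

section \<open>Finite MDP (minimization)\<close>

definition Qa :: "nat set \<Rightarrow> (nat \<Rightarrow> 'a \<Rightarrow> nat \<Rightarrow> real) \<Rightarrow> (nat \<Rightarrow> 'a \<Rightarrow> real) \<Rightarrow> (nat \<Rightarrow> real) \<Rightarrow> nat \<Rightarrow> 'a \<Rightarrow> real" where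
  "Qa S q c J i a = c i a + (\<Sum>j\<in>S. q i a j * J j)"

definition Tm :: "nat set \<Rightarrow> (nat \<Rightarrow> 'a set) \<Rightarrow> (nat \<Rightarrow> 'a \<Rightarrow> nat \<Rightarrow> real) \<Rightarrow> (nat \<Rightarrow> 'a \<Rightarrow> real) \<Rightarrow> (nat \<Rightarrow> real) \<Rightarrow> nat \<Rightarrow> real" where
  "Tm S A q c J = (\<lambda>i. Min (Qa S q c J i ` A i))"

definition qd :: "(nat \<Rightarrow> 'a \<Rightarrow> nat \<Rightarrow> real) \<Rightarrow> (nat \<Rightarrow> 'a) \<Rightarrow> nat \<Rightarrow> nat \<Rightarrow> real" where
  "qd q d = (\<lambda>i j. q i (d i) j)"

definition cd :: "(nat \<Rightarrow> 'a \<Rightarrow> real) \<Rightarrow> (nat \<Rightarrow> 'a) \<Rightarrow> nat \<Rightarrow> real" where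
  "cd c d = (\<lambda>i. c i (d i))"

definition mdp :: "nat set \<Rightarrow> (nat \<Rightarrow> 'a set) \<Rightarrow> (nat \<Rightarrow> 'a \<Rightarrow> nat \<Rightarrow> real) \<Rightarrow> bool" where
  "mdp S A q \<longleftrightarrow> finite S \<and> (\<forall>i\<in>S. finite (A i) \<and> A i \<noteq> {} \<and>
      (\<forall>a\<in>A i. (\<forall>j\<in>S. 0 \<le> q i a j) \<and> (\<Sum>j\<in>S. q i a j) \<le> 1))"

lemma Lop_qd: "Lop S (qd q d) (cd c d) J i = Qa S q c J i (d i)"
  by (simp add: Lop_def Qa_def qd_def cd_def)

lemma mdp_kern: "mdp S A q \<Longrightarrow> \<forall>i\<in>S. d i \<in> A i \<Longrightarrow> kern S (qd q d)"
  unfolding mdp_def kern_def qd_def by simp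

lemma Tm_le: "mdp S A q \<Longrightarrow> i\<in>S \<Longrightarrow> a \<in> A i \<Longrightarrow> Tm S A q c J i \<le> Qa S q c J i a"
  unfolding Tm_def mdp_def by (auto intro: Min_le)

lemma Tm_attain: "mdp S A q \<Longrightarrow> i\<in>S \<Longrightarrow> \<exists>a\<in>A i. Tm S A q c J i = Qa S q c J i a"
proof -
  assume m: "mdp S A q" and i: "i\<in>S"
  have "finite (A i)" "A i \<noteq> {}" using m i by (auto simp: mdp_def)
  then have "Min (Qa S q c J i ` A i) \<in> Qa S q c J i ` A i" by (intro Min_in) auto
  then show ?thesis unfolding Tm_def by auto
qed

lemma Qa_mono: "mdp S A q \<Longrightarrow> i\<in>S \<Longrightarrow> a \<in> A i \<Longrightarrow> (\<And>j. j\<in>S \<Longrightarrow> J j \<le> J' j) \<Longrightarrow> Qa S q c J i a \<le> Qa S q c J' i a"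
  unfolding Qa_def mdp_def by (auto intro!: sum_mono mult_left_mono)

lemma Qa_nonexp: assumes "mdp S A q" "i\<in>S" "a \<in> A i" "\<And>j. j\<in>S \<Longrightarrow> \<bar>J j - J' j\<bar> \<le> e"
  shows "\<bar>Qa S q c J i a - Qa S q c J' i a\<bar> \<le> e"
proof -
  have "\<bar>J i - J' i\<bar> \<le> e" by (rule assms(4)[OF assms(2)])
  then have e0: "0 \<le> e" by linarith
  have "\<bar>Qa S q c J i a - Qa S q c J' i a\<bar> = \<bar>\<Sum>j\<in>S. q i a j * (J j - J' j)\<bar>"
    unfolding Qa_def by (simp add: sum_subtractf algebra_simps)
  also have "\<dots> \<le> (\<Sum>j\<in>S. \<bar>q i a j * (J j - J' j)\<bar>)" by (rule sum_abs)
  also have "\<dots> \<le> (\<Sum>j\<in>S. q i a j * e)"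
  proof (rule sum_mono)
    fix j assume j: "j\<in>S"
    have q0: "0 \<le> q i a j" using assms(1-3) j unfolding mdp_def by blast
    show "\<bar>q i a j * (J j - J' j)\<bar> \<le> q i a j * e"
      using q0 assms(4)[OF j] by (simp add: abs_mult mult_left_mono)
  qed
  also have "\<dots> = (\<Sum>j\<in>S. q i a j) * e" by (simp add: sum_distrib_right)
  also have "\<dots> \<le> 1 * e" using assms(1-3) e0 unfolding mdp_def by (intro mult_right_mono) simp_all
  finally show ?thesis by simp
qed

lemma Tm_smono: "mdp S A q \<Longrightarrow> smono S (Tm S A q c)"
  unfolding smono_def
proof (intro allI impI ballI)
  fix J J' :: "nat \<Rightarrow> real" and i assume m: "mdp S A q" and le: "\<forall>j\<in>S. J j \<le> J' j" and i: "i\<in>S"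
  obtain a where a: "a \<in> A i" "Tm S A q c J' i = Qa S q c J' i a" using Tm_attain[OF m i] by blast
  have "Tm S A q c J i \<le> Qa S q c J i a" by (rule Tm_le[OF m i a(1)])
  also have "\<dots> \<le> Qa S q c J' i a" using Qa_mono[OF m i a(1)] le by blast
  finally show "Tm S A q c J i \<le> Tm S A q c J' i" using a by simp
qed

lemma Tm_nonexp: "mdp S A q \<Longrightarrow> nonexp S (Tm S A q c)"
  unfolding nonexp_def
proof (intro allI impI ballI)
  fix J J' :: "nat \<Rightarrow> real" and e i assume m: "mdp S A q" and le: "\<forall>j\<in>S. \<bar>J j - J' j\<bar> \<le> e" and i: "i\<in>S"
  obtain a where a: "a \<in> A i" "Tm S A q c J' i = Qa S q c J' i a" using Tm_attain[OF m i] by blast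
  obtain b where b: "b \<in> A i" "Tm S A q c J i = Qa S q c J i b" using Tm_attain[OF m i] by blast
  have le': "\<forall>j\<in>S. \<bar>J' j - J j\<bar> \<le> e" using le by (simp add: abs_minus_commute)
  have "Tm S A q c J i \<le> Qa S q c J i a" by (rule Tm_le[OF m i a(1)])
  moreover have "Tm S A q c J' i \<le> Qa S q c J' i b" by (rule Tm_le[OF m i b(1)])
  moreover have "\<bar>Qa S q c J i a - Qa S q c J' i a\<bar> \<le> e" using Qa_nonexp[OF m i a(1)] le by blast
  moreover have "\<bar>Qa S q c J' i b - Qa S q c J i b\<bar> \<le> e" using Qa_nonexp[OF m i b(1)] le' by blast
  ultimately show "\<bar>Tm S A q c J i - Tm S A q c J' i\<bar> \<le> e" using a b by linarith
qed

lemma greedy: assumes "mdp S A q"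
  shows "\<exists>d\<in>Pi\<^sub>E S A. \<forall>i\<in>S. Lop S (qd q d) (cd c d) J i = Tm S A q c J i"
proof -
  define d where "d = (\<lambda>i. if i\<in>S then (SOME a. a\<in>A i \<and> Tm S A q c J i = Qa S q c J i a) else undefined)"
  have d: "d i \<in> A i \<and> Tm S A q c J i = Qa S q c J i (d i)" if "i\<in>S" for i
  proof -
    have "\<exists>a. a\<in>A i \<and> Tm S A q c J i = Qa S q c J i a" using Tm_attain[OF assms that, where c=c and J=J] by blast
    from someI_ex[OF this] show ?thesis unfolding d_def using that by simp
  qed
  have "d \<in> Pi\<^sub>E S A" using d by (auto simp: PiE_iff extensional_def d_def)
  then show ?thesis using d by (auto simp: Lop_qd)
qed

definition proper :: "nat set \<Rightarrow> (nat \<Rightarrow> 'a \<Rightarrow> nat \<Rightarrow> real) \<Rightarrow> (nat \<Rightarrow> 'a) \<Rightarrow> bool" where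
  "proper S q d \<longleftrightarrow> (\<forall>i\<in>S. (INF k. surv S (qd q d) k i) \<le> 0)"

theorem mdp_main:
  assumes m: "mdp S A q"
    and M2: "\<exists>J. \<forall>i\<in>S. Tm S A q c J i \<le> J i"
    and M3: "\<forall>d. (\<forall>i\<in>S. d i \<in> A i) \<longrightarrow> (\<exists>i\<in>S. (INF k. surv S (qd q d) k i) > 0) \<longrightarrow>
              (\<exists>i\<in>S. \<not> bdd_above (range (\<lambda>k. (Lop S (qd q d) (cd c d) ^^ k) (\<lambda>_. 0) i)))"
  shows "\<exists>Js. (\<forall>i\<in>S. Tm S A q c Js i = Js i) \<and> (\<forall>J. \<forall>i\<in>S. (\<lambda>k. (Tm S A q c ^^ k) J i) \<longlonglongrightarrow> Js i)"
proof -
  let ?T = "Tm S A q c"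
  let ?L = "\<lambda>d. Lop S (qd q d) (cd c d)"
  have fin: "finite S" using m by (simp add: mdp_def)
  have S2: "proper S q d" if d: "\<forall>i\<in>S. d i \<in> A i" and J: "\<And>i. i\<in>S \<Longrightarrow> ?L d J i \<le> J i" for d J
  proof (rule ccontr)
    assume "\<not> proper S q d"
    then have ex: "\<exists>i\<in>S. (INF k. surv S (qd q d) k i) > 0" by (auto simp: proper_def not_le)
    have dA: "\<forall>i\<in>S. d i \<in> A i" using d by blast
    have "\<exists>i\<in>S. \<not> bdd_above (range (\<lambda>k. (Lop S (qd q d) (cd c d) ^^ k) (\<lambda>_. 0) i))"
      by (rule mp[OF mp[OF spec[OF M3, of d] dA] ex])
    then obtain i where i: "i\<in>S" "\<not> bdd_above (range (\<lambda>k. (Lop S (qd q d) (cd c d) ^^ k) (\<lambda>_. 0) i))"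
      by (elim bexE) (intro that)
    obtain B where "\<forall>k. \<forall>i\<in>S. (Lop S (qd q d) (cd c d) ^^ k) (\<lambda>_. 0) i \<le> J i + B"
      using chain_bdd_above[OF mdp_kern[OF m d] J] by blast
    then have "bdd_above (range (\<lambda>k. (Lop S (qd q d) (cd c d) ^^ k) (\<lambda>_. 0) i))" using i(1) by (auto simp: bdd_above_def)
    then show False using i(2) by simp
  qed
  define val where "val d = (SOME J. (\<forall>i\<in>S. ?L d J i = J i) \<and> (\<forall>f. \<forall>i\<in>S. (\<lambda>k. (?L d ^^ k) f i) \<longlonglongrightarrow> J i))" for d
  have val: "(\<forall>i\<in>S. ?L d (val d) i = val d i) \<and> (\<forall>f. \<forall>i\<in>S. (\<lambda>k. (?L d ^^ k) f i) \<longlonglongrightarrow> val d i)"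
    if d: "\<forall>i\<in>S. d i \<in> A i" and p: "proper S q d" for d
  proof -
    have ex: "\<exists>J. (\<forall>i\<in>S. ?L d J i = J i) \<and> (\<forall>f. \<forall>i\<in>S. (\<lambda>k. (?L d ^^ k) f i) \<longlonglongrightarrow> J i)"
      by (rule chain_conv[OF mdp_kern[OF m d]]) (use p in \<open>simp add: proper_def\<close>)
    show ?thesis unfolding val_def by (rule someI_ex[OF ex])
  qed
  have S2': "val d i \<le> J i" if d: "\<forall>i\<in>S. d i \<in> A i" and J: "\<And>i. i\<in>S \<Longrightarrow> ?L d J i \<le> J i" and i: "i\<in>S" for d J i
  proof -
    have "(\<lambda>k. (?L d ^^ k) J i) \<longlonglongrightarrow> val d i" using val[OF d S2[OF d J]] i by blast
    moreover have "(?L d ^^ k) J i \<le> J i" for k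
      by (rule smono_iter_le[OF Lop_smono[OF mdp_kern[OF m d]] J i])
    ultimately show ?thesis by (intro LIMSEQ_le_const2) auto
  qed
  have S2'': "J i \<le> val d i" if d: "\<forall>i\<in>S. d i \<in> A i" and p: "proper S q d" and J: "\<And>i. i\<in>S \<Longrightarrow> J i \<le> ?L d J i" and i: "i\<in>S" for d J i
  proof -
    have "(\<lambda>k. (?L d ^^ k) J i) \<longlonglongrightarrow> val d i" using val[OF d p] i by blast
    moreover have "J i \<le> (?L d ^^ k) J i" for k
      by (rule smono_iter_ge[OF Lop_smono[OF mdp_kern[OF m d]] J i])
    ultimately show ?thesis by (intro LIMSEQ_le_const) auto
  qed
  define D where "D = {d \<in> Pi\<^sub>E S A. proper S q d}"
  have "finite (Pi\<^sub>E S A)" by (rule finite_PiE[OF fin]) (use m in \<open>auto simp: mdp_def\<close>)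
  then have finD: "finite D" unfolding D_def by (rule rev_finite_subset) auto
  have Dd: "\<forall>i\<in>S. d i \<in> A i" if "d \<in> D" for d using that by (auto simp: D_def PiE_iff)
  obtain J0 where J0: "\<forall>i\<in>S. ?T J0 i \<le> J0 i" using M2 by blast
  obtain d0 where d0: "d0 \<in> Pi\<^sub>E S A" "\<forall>i\<in>S. ?L d0 J0 i = ?T J0 i" using greedy[OF m] by blast
  have d0A: "\<forall>i\<in>S. d0 i \<in> A i" using d0(1) by (auto simp: PiE_iff)
  have "proper S q d0" by (rule S2[OF d0A, where J=J0]) (use d0(2) J0 in simp)
  then have "d0 \<in> D" using d0(1) by (simp add: D_def)
  then have Dne: "D \<noteq> {}" by blast
  define f where "f d = (\<Sum>i\<in>S. val d i)" for d
  have "Min (f ` D) \<in> f ` D" by (rule Min_in) (use finD Dne in auto)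
  then obtain ds where ds: "ds \<in> D" "f ds = Min (f ` D)" by auto
  have dsmin: "f ds \<le> f d" if "d \<in> D" for d
    unfolding ds(2) by (rule Min_le) (use finD that in auto)
  define Js where "Js = val ds"
  have dsA: "\<forall>i\<in>S. ds i \<in> A i" using Dd[OF ds(1)] .
  have dsp: "proper S q ds" using ds(1) by (simp add: D_def)
  have Jsfix_d: "\<forall>i\<in>S. ?L ds Js i = Js i" using val[OF dsA dsp] by (simp add: Js_def)
  have fixp: "?T Js i = Js i" if i: "i\<in>S" for i
  proof -
    obtain d' where d': "d' \<in> Pi\<^sub>E S A" "\<forall>i\<in>S. ?L d' Js i = ?T Js i" using greedy[OF m] by blast
    have d'A: "\<forall>i\<in>S. d' i \<in> A i" using d'(1) by (auto simp: PiE_iff)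
    have le1: "?L d' Js j \<le> Js j" if "j\<in>S" for j
    proof -
      have "?T Js j \<le> Qa S q c Js j (ds j)" by (rule Tm_le[OF m that bspec[OF dsA that]])
      then show ?thesis using d'(2) Jsfix_d that by (simp add: Lop_qd)
    qed
    have pd': "proper S q d'" by (rule S2[OF d'A le1])
    have vle: "val d' j \<le> Js j" if "j\<in>S" for j by (rule S2'[OF d'A le1 that])
    have "d' \<in> D" using d'(1) pd' by (simp add: D_def)
    then have "f ds \<le> f d'" by (rule dsmin)
    then have fle: "f ds \<le> f d'" .
    have veq: "val d' j = Js j" if j: "j\<in>S" for j
    proof (rule ccontr)
      assume "val d' j \<noteq> Js j"
      then have "val d' j < Js j" using vle[OF j] by simp
      then have "(\<Sum>i\<in>S. val d' i) < (\<Sum>i\<in>S. Js i)" using vle j by (intro sum_strict_mono_ex1[OF fin]) auto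
      then show False using fle unfolding f_def Js_def by simp
    qed
    have "?T Js i = ?L d' Js i" using d'(2) i by simp
    also have "\<dots> = ?L d' (val d') i"
      by (rule smono_local[OF Lop_smono[OF mdp_kern[OF m d'A]] _ i]) (simp add: veq)
    also have "\<dots> = val d' i" using val[OF d'A pd'] i by blast
    finally show ?thesis using veq i by simp
  qed
  have uniq: "F i = Js i" if F: "\<And>i. i\<in>S \<Longrightarrow> ?T F i = F i" and i: "i\<in>S" for F i
  proof (rule antisym)
    have "F j \<le> ?L ds F j" if "j\<in>S" for j
      using Tm_le[OF m that bspec[OF dsA that], of c F] F[OF that] by (simp add: Lop_qd)
    then show "F i \<le> Js i" unfolding Js_def by (rule S2''[OF dsA dsp _ i])
  next
    obtain d' where d': "d' \<in> Pi\<^sub>E S A" "\<forall>i\<in>S. ?L d' F i = ?T F i" using greedy[OF m] by blast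
    have d'A: "\<forall>i\<in>S. d' i \<in> A i" using d'(1) by (auto simp: PiE_iff)
    have le1: "?L d' F j \<le> F j" if "j\<in>S" for j using d'(2) F that by simp
    have pd': "proper S q d'" by (rule S2[OF d'A le1])
    have "Js j \<le> ?L d' Js j" if "j\<in>S" for j
      using Tm_le[OF m that bspec[OF d'A that], of c Js] fixp[OF that] by (simp add: Lop_qd)
    then have "Js i \<le> val d' i" by (rule S2''[OF d'A pd' _ i])
    also have "\<dots> \<le> F i" by (rule S2'[OF d'A le1 i])
    finally show "Js i \<le> F i" .
  qed
  have conv: "(\<lambda>k. (?T ^^ k) J i) \<longlonglongrightarrow> Js i" if i: "i\<in>S" for J i
  proof -
    define B where "B = (\<Sum>j\<in>S. \<bar>J j - Js j\<bar>)"
    define lo where "lo j = Js j - B" for j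
    define hi where "hi j = Js j + B" for j
    have dJ: "\<bar>J j - Js j\<bar> \<le> B" if "j\<in>S" for j unfolding B_def using fin that by (intro member_le_sum) auto
    have B0: "0 \<le> B" unfolding B_def by (intro sum_nonneg) auto
    have sm: "smono S ?T" by (rule Tm_smono[OF m])
    have ne: "nonexp S ?T" by (rule Tm_nonexp[OF m])
    have Jsit: "(?T ^^ k) Js j = Js j" if "j\<in>S" for k j by (rule smono_fix[OF sm fixp that])
    have hi1: "(?T ^^ k) hi i \<le> (?L ds ^^ k) hi i" for k
      by (rule iter_le_iter[OF Lop_smono[OF mdp_kern[OF m dsA]] _ i])
         (use Tm_le[OF m _ bspec[OF dsA]] in \<open>simp add: Lop_qd\<close>)
    have hi2: "Js i \<le> (?T ^^ k) hi i" for k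
      using smono_iter[OF sm _ i, of Js hi k] Jsit[OF i, of k] B0 by (simp add: hi_def)
    have hic: "(\<lambda>k. (?L ds ^^ k) hi i) \<longlonglongrightarrow> Js i" using val[OF dsA dsp] i by (simp add: Js_def)
    have loinc: "lo j \<le> ?T lo j" if j: "j\<in>S" for j
    proof -
      have "\<forall>j\<in>S. \<bar>lo j - Js j\<bar> \<le> B" using B0 by (simp add: lo_def)
      then have "\<bar>?T lo j - ?T Js j\<bar> \<le> B" using ne j unfolding nonexp_def by blast
      then show ?thesis using fixp[OF j] by (simp add: lo_def)
    qed
    have loub: "(?T ^^ k) lo j \<le> Js j" if "j\<in>S" for k j
      using smono_iter[OF sm _ that, of lo Js k] Jsit[OF that, of k] B0 by (simp add: lo_def)
    obtain Lf where Lf: "\<forall>i\<in>S. ?T Lf i = Lf i" "\<forall>i\<in>S. (\<lambda>k. (?T ^^ k) lo i) \<longlonglongrightarrow> Lf i"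
      using iter_inc_fix[OF fin sm ne loinc loub] by blast
    have "Lf i = Js i" by (rule uniq) (use Lf i in auto)
    then have loc: "(\<lambda>k. (?T ^^ k) lo i) \<longlonglongrightarrow> Js i" using Lf(2) i by auto
    have l1: "(?T ^^ k) lo i \<le> (?T ^^ k) J i" for k
    proof (rule smono_iter[OF sm _ i])
      fix j assume "j\<in>S" then show "lo j \<le> J j" using dJ[of j] by (simp add: lo_def abs_le_iff)
    qed
    have l2: "(?T ^^ k) J i \<le> (?T ^^ k) hi i" for k
    proof (rule smono_iter[OF sm _ i])
      fix j assume "j\<in>S" then show "J j \<le> hi j" using dJ[of j] by (simp add: hi_def abs_le_iff)
    qed
    have e1: "\<forall>\<^sub>F k in sequentially. (?T ^^ k) lo i \<le> (?T ^^ k) J i" using l1 by simp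
    have "(?T ^^ k) J i \<le> (?L ds ^^ k) hi i" for k using l2[of k] hi1[of k] by linarith
    then have e2: "\<forall>\<^sub>F k in sequentially. (?T ^^ k) J i \<le> (?L ds ^^ k) hi i" by simp
    show ?thesis by (rule tendsto_sandwich[OF e1 e2 loc hic])
  qed
  show ?thesis using fixp conv by blast
qed


definition sdelta :: "'a set \<Rightarrow> ('a \<Rightarrow> real) set" where
  "sdelta U = {x. (\<forall>u\<in>U. 0 \<le> x u) \<and> sum x U = 1}"

definition Fmax :: "'a set \<Rightarrow> 'b set \<Rightarrow> ('a \<Rightarrow> 'b \<Rightarrow> real) \<Rightarrow> ('a \<Rightarrow> real) \<Rightarrow> real" where
  "Fmax U V X x = Max ((\<lambda>v. \<Sum>u\<in>U. x u * X u v) ` V)"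

lemma bw_finite:
  fixes x :: "nat \<Rightarrow> 'a \<Rightarrow> real"
  assumes "finite I" "\<And>k i. i\<in>I \<Longrightarrow> \<bar>x k i\<bar> \<le> (B::real)"
  shows "\<exists>r. strict_mono r \<and> (\<forall>i\<in>I. \<exists>l. (\<lambda>k. x (r k) i) \<longlonglongrightarrow> l)"
  using assms
proof (induction I rule: finite_induct)
  case empty
  have "strict_mono (id::nat\<Rightarrow>nat)" by (simp add: strict_mono_def)
  then show ?case by blast
next
  case (insert a I)
  obtain r where r: "strict_mono r" "\<forall>i\<in>I. \<exists>l. (\<lambda>k. x (r k) i) \<longlonglongrightarrow> l" using insert by auto
  have "bounded (range (\<lambda>k. x (r k) a))" unfolding bounded_iff using insert.prems by auto
  then obtain l r2 where r2: "strict_mono r2" "((\<lambda>k. x (r k) a) \<circ> r2) \<longlonglongrightarrow> l"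
    using bounded_imp_convergent_subsequence by blast
  have "\<forall>i\<in>insert a I. \<exists>l. (\<lambda>k. x ((r \<circ> r2) k) i) \<longlonglongrightarrow> l"
  proof
    fix i assume i: "i \<in> insert a I"
    show "\<exists>l. (\<lambda>k. x ((r \<circ> r2) k) i) \<longlonglongrightarrow> l"
    proof (cases "i = a")
      case True then show ?thesis using r2(2) by (auto simp: o_def)
    next
      case False
      then obtain l' where "(\<lambda>k. x (r k) i) \<longlonglongrightarrow> l'" using r(2) i by auto
      from LIMSEQ_subseq_LIMSEQ[OF this r2(1)] show ?thesis by (auto simp: o_def)
    qed
  qed
  moreover have "strict_mono (r \<circ> r2)" using r(1) r2(1) by (rule strict_mono_o)
  ultimately show ?case by blast
qed

lemma sdelta_le1: "finite U \<Longrightarrow> x \<in> sdelta U \<Longrightarrow> u \<in> U \<Longrightarrow> x u \<le> 1"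
proof -
  assume a: "finite U" "x \<in> sdelta U" "u \<in> U"
  have "x u \<le> sum x U" using a by (intro member_le_sum) (auto simp: sdelta_def)
  then show ?thesis using a(2) by (simp add: sdelta_def)
qed

lemma Fmax_ge: "finite V \<Longrightarrow> v \<in> V \<Longrightarrow> (\<Sum>u\<in>U. x u * X u v) \<le> Fmax U V X x"
  unfolding Fmax_def by (rule Max_ge) auto

lemma Fmax_le: "finite V \<Longrightarrow> V \<noteq> {} \<Longrightarrow> (\<And>v. v\<in>V \<Longrightarrow> (\<Sum>u\<in>U. x u * X u v) \<le> c) \<Longrightarrow> Fmax U V X x \<le> c"
  unfolding Fmax_def by (rule Max.boundedI) auto

lemma Fmax_less: "finite V \<Longrightarrow> V \<noteq> {} \<Longrightarrow> (\<And>v. v\<in>V \<Longrightarrow> (\<Sum>u\<in>U. x u * X u v) < c) \<Longrightarrow> Fmax U V X x < c"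
  unfolding Fmax_def by (subst Max_less_iff) auto

lemma Fmax_in: "finite V \<Longrightarrow> V \<noteq> {} \<Longrightarrow> \<exists>v\<in>V. Fmax U V X x = (\<Sum>u\<in>U. x u * X u v)"
proof -
  assume "finite V" "V \<noteq> {}"
  then have "Max ((\<lambda>v. \<Sum>u\<in>U. x u * X u v) ` V) \<in> (\<lambda>v. \<Sum>u\<in>U. x u * X u v) ` V" by (intro Max_in) auto
  then show ?thesis unfolding Fmax_def by auto
qed

lemma attain_min:
  fixes X :: "'a \<Rightarrow> 'b \<Rightarrow> real"
  assumes U: "finite U" "U \<noteq> {}" and V: "finite V" "V \<noteq> {}"
  shows "\<exists>x\<in>sdelta U. \<forall>x'\<in>sdelta U. Fmax U V X x \<le> Fmax U V X x'"
proof -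
  define K where "K = (\<Sum>u\<in>U. \<Sum>v\<in>V. \<bar>X u v\<bar>)"
  obtain v0 where v0: "v0 \<in> V" using V by auto
  have lb: "- K \<le> Fmax U V X x" if x: "x \<in> sdelta U" for x
  proof -
    have "- K \<le> - (\<Sum>u\<in>U. \<bar>X u v0\<bar>)"
      unfolding K_def using V v0 by (auto intro!: sum_mono member_le_sum)
    also have "\<dots> \<le> (\<Sum>u\<in>U. x u * X u v0)"
      unfolding sum_negf[symmetric]
    proof (rule sum_mono)
      fix u assume u: "u\<in>U"
      have "0 \<le> x u" "x u \<le> 1" using x u sdelta_le1[OF U(1) x u] by (auto simp: sdelta_def)
      then have "x u * \<bar>X u v0\<bar> \<le> \<bar>X u v0\<bar>" by (simp add: mult_left_le_one_le)
      moreover have "x u * (- \<bar>X u v0\<bar>) \<le> x u * X u v0" using \<open>0 \<le> x u\<close>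
        by (intro mult_left_mono) auto
      ultimately show "- \<bar>X u v0\<bar> \<le> x u * X u v0" by linarith
    qed
    also have "\<dots> \<le> Fmax U V X x" by (rule Fmax_ge[OF V(1) v0])
    finally show ?thesis .
  qed
  have ne: "sdelta U \<noteq> {}"
  proof -
    have "(\<lambda>u. 1 / real (card U)) \<in> sdelta U" using U by (simp add: sdelta_def)
    then show ?thesis by blast
  qed
  define m where "m = Inf (Fmax U V X ` sdelta U)"
  have bdd: "bdd_below (Fmax U V X ` sdelta U)" by (rule bdd_belowI[where m="-K"]) (use lb in auto)
  have "\<exists>x\<in>sdelta U. Fmax U V X x < m + inverse (real (Suc k))" for k
  proof -
    have lt: "Inf (Fmax U V X ` sdelta U) < m + inverse (real (Suc k))" unfolding m_def by simp
    show ?thesis using lt cINF_less_iff[OF ne bdd] by blast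
  qed
  then obtain xs where xs: "\<And>k. xs k \<in> sdelta U" "\<And>k. Fmax U V X (xs k) < m + inverse (real (Suc k))"
    by metis
  have "\<bar>xs k u\<bar> \<le> 1" if "u\<in>U" for k u
    using xs(1)[of k] sdelta_le1[OF U(1) xs(1) that, of k] that by (auto simp: sdelta_def)
  then obtain r where r: "strict_mono r" "\<forall>u\<in>U. \<exists>l. (\<lambda>k. xs (r k) u) \<longlonglongrightarrow> l"
    using bw_finite[OF U(1), of xs 1] by blast
  define xl where "xl u = lim (\<lambda>k. xs (r k) u)" for u
  have conv: "(\<lambda>k. xs (r k) u) \<longlonglongrightarrow> xl u" if "u\<in>U" for u
    using r(2) that unfolding xl_def by (metis limI)
  have xl: "xl \<in> sdelta U"
  proof -
    have "0 \<le> xl u" if u: "u\<in>U" for u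
      by (rule LIMSEQ_le_const[OF conv[OF u]]) (use xs(1) u in \<open>auto simp: sdelta_def\<close>)
    moreover have "sum xl U = 1"
    proof -
      have "(\<lambda>k. \<Sum>u\<in>U. xs (r k) u) \<longlonglongrightarrow> (\<Sum>u\<in>U. xl u)" by (intro tendsto_sum conv)
      moreover have "(\<lambda>k. \<Sum>u\<in>U. xs (r k) u) = (\<lambda>k. 1)" using xs(1) by (auto simp: sdelta_def)
      ultimately have "(\<lambda>k. 1::real) \<longlonglongrightarrow> (\<Sum>u\<in>U. xl u)" by simp
      then show ?thesis using LIMSEQ_unique[OF _ tendsto_const] by metis
    qed
    ultimately show ?thesis by (simp add: sdelta_def)
  qed
  have "Fmax U V X xl \<le> m"
  proof (rule Fmax_le[OF V])
    fix v assume v: "v\<in>V"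
    have c1: "(\<lambda>k. \<Sum>u\<in>U. xs (r k) u * X u v) \<longlonglongrightarrow> (\<Sum>u\<in>U. xl u * X u v)"
      by (intro tendsto_sum tendsto_mult_right conv)
    have c2: "(\<lambda>k. m + inverse (real (Suc k))) \<longlonglongrightarrow> m" by (rule LIMSEQ_inverse_real_of_nat_add)
    have "(\<Sum>u\<in>U. xs (r k) u * X u v) \<le> m + inverse (real (Suc k))" for k
    proof -
      have "(\<Sum>u\<in>U. xs (r k) u * X u v) \<le> Fmax U V X (xs (r k))" by (rule Fmax_ge[OF V(1) v])
      also have "\<dots> < m + inverse (real (Suc (r k)))" by (rule xs(2))
      also have "\<dots> \<le> m + inverse (real (Suc k))"
        using seq_suble[OF r(1), of k] by (simp add: le_imp_inverse_le)
      finally show ?thesis by simp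
    qed
    then show "(\<Sum>u\<in>U. xl u * X u v) \<le> m" by (intro LIMSEQ_le[OF c1 c2]) auto
  qed
  moreover have "m \<le> Fmax U V X x'" if "x' \<in> sdelta U" for x'
    unfolding m_def by (rule cInf_lower[OF _ bdd]) (use that in auto)
  ultimately show ?thesis using xl by force
qed


lemma small_t: "(p0::real) < a \<Longrightarrow> \<exists>t. 0 < t \<and> t \<le> 1 \<and> (1-t) * p0 + t * p1 < a"
proof -
  assume p0: "p0 < a"
  show ?thesis
  proof (cases "p1 < a")
    case True then show ?thesis by (intro exI[of _ 1]) simp
  next
    case False
    define t where "t = (a - p0) / (2 * (p1 - p0))"
    have d: "0 < p1 - p0" using False p0 by simp
    have t0: "0 < t" unfolding t_def using p0 d by simp
    have "t * (2 * (p1 - p0)) = a - p0" unfolding t_def using d by simp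
    then have e: "t * (p1 - p0) = (a - p0) / 2" by (simp add: field_simps)
    have "t \<le> 1/2" unfolding t_def using d False by (simp add: field_simps)
    moreover have "(1-t) * p0 + t * p1 = p0 + t * (p1 - p0)" by (simp add: algebra_simps)
    moreover have "p0 + (a - p0)/2 < a" using p0 by (simp add: field_simps)
    ultimately show ?thesis using t0 e by (intro exI[of _ t]) auto
  qed
qed

lemma mix_lt: "0 < t \<Longrightarrow> t \<le> 1 \<Longrightarrow> p \<le> a \<Longrightarrow> r < a \<Longrightarrow> (1-t)*p + t*r < (a::real)"
proof -
  assume a: "0 < t" "t \<le> 1" "p \<le> a" "r < a"
  have "(1-t)*p \<le> (1-t)*a" using a by (intro mult_left_mono) auto
  moreover have "t*r < t*a" using a by (intro mult_strict_left_mono) auto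
  ultimately have "(1-t)*p + t*r < (1-t)*a + t*a" by linarith
  then show ?thesis by (simp add: algebra_simps)
qed

lemma sum_drop:
  fixes y f :: "'a \<Rightarrow> real"
  assumes "finite V" "v0 \<in> V"
  shows "(\<Sum>v\<in>V. (if v = v0 then 0 else y v) * f v) = (\<Sum>v\<in>V - {v0}. y v * f v)"
proof -
  have "(\<Sum>v\<in>V. (if v = v0 then 0 else y v) * f v) = (if v0 = v0 then 0 else y v0) * f v0 + (\<Sum>v\<in>V - {v0}. (if v = v0 then 0 else y v) * f v)"
    by (rule sum.remove[OF assms])
  moreover have "(\<Sum>v\<in>V - {v0}. (if v = v0 then 0 else y v) * f v) = (\<Sum>v\<in>V - {v0}. y v * f v)"
    by (rule sum.cong) auto
  ultimately show ?thesis by simp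
qed

lemma sdelta_drop:
  fixes y :: "'a \<Rightarrow> real"
  assumes "finite V" "v0 \<in> V" "y \<in> sdelta (V - {v0})"
  shows "(\<lambda>v. if v = v0 then 0 else y v) \<in> sdelta V"
  using assms sum_drop[OF assms(1,2), of y "\<lambda>_. 1"] by (auto simp: sdelta_def)

lemma sdelta_mix:
  assumes "x \<in> sdelta U" "x' \<in> sdelta U" "0 \<le> t" "t \<le> 1"
  shows "(\<lambda>u. (1-t) * x u + t * x' u) \<in> sdelta U"
  using assms by (auto simp: sdelta_def sum.distrib sum_distrib_left[symmetric])

lemma sum_mix: fixes x x' X :: "'a \<Rightarrow> real" shows "(\<Sum>u\<in>U. ((1-t) * x u + t * x' u) * X u) = (1-t) * (\<Sum>u\<in>U. x u * X u) + t * (\<Sum>u\<in>U. x' u * X u)"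
  by (simp add: distrib_right sum.distrib sum_distrib_left mult.assoc)

lemma double_sum: fixes X :: "'a \<Rightarrow> 'b \<Rightarrow> real" shows
  "(\<Sum>v\<in>V. y v * (\<Sum>u\<in>U. x u * X u v)) = (\<Sum>u\<in>U. x u * (\<Sum>v\<in>V. y v * X u v))"
  unfolding sum_distrib_left by (subst sum.swap) (simp add: mult.left_commute)

lemma minimax_aux:
  fixes X :: "'a \<Rightarrow> 'b \<Rightarrow> real"
  shows "\<forall>U V. card U + card V = n \<longrightarrow> finite U \<longrightarrow> U \<noteq> {} \<longrightarrow> finite V \<longrightarrow> V \<noteq> {} \<longrightarrow>
    (\<exists>x\<in>sdelta U. \<exists>y\<in>sdelta V. \<exists>w. (\<forall>v\<in>V. (\<Sum>u\<in>U. x u * X u v) \<le> w) \<and> (\<forall>u\<in>U. w \<le> (\<Sum>v\<in>V. y v * X u v)))"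
proof (induction n rule: less_induct)
  case (less n)
  show ?case
  proof (intro allI impI)
    fix U :: "'a set" and V :: "'b set" assume n: "card U + card V = n" and U: "finite U" "U \<noteq> {}" and V: "finite V" "V \<noteq> {}"
    define Y where "Y = (\<lambda>v u. - X u v)"
    obtain x0 where x0: "x0 \<in> sdelta U" "\<forall>x'\<in>sdelta U. Fmax U V X x0 \<le> Fmax U V X x'"
      using attain_min[OF U V] by blast
    obtain y0 where y0: "y0 \<in> sdelta V" "\<forall>y'\<in>sdelta V. Fmax V U Y y0 \<le> Fmax V U Y y'"
      using attain_min[OF V U] by blast
    define a where "a = Fmax U V X x0"
    define b where "b = - Fmax V U Y y0"
    have A1: "(\<Sum>u\<in>U. x0 u * X u v) \<le> a" if "v\<in>V" for v unfolding a_def by (rule Fmax_ge[OF V(1) that])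
    have negY: "(\<Sum>v\<in>V. y v * Y v u) = - (\<Sum>v\<in>V. y v * X u v)" for y u
      unfolding Y_def by (simp add: sum_negf[symmetric])
    have B1: "b \<le> (\<Sum>v\<in>V. y0 v * X u v)" if "u\<in>U" for u
      using Fmax_ge[OF U(1) that, where U=V and x=y0 and X=Y] unfolding b_def negY by simp
    show "\<exists>x\<in>sdelta U. \<exists>y\<in>sdelta V. \<exists>w. (\<forall>v\<in>V. (\<Sum>u\<in>U. x u * X u v) \<le> w) \<and> (\<forall>u\<in>U. w \<le> (\<Sum>v\<in>V. y v * X u v))"
    proof (cases "a \<le> b")
      case True
      then show ?thesis using x0(1) y0(1) A1 B1 by (intro bexI[of _ x0] bexI[of _ y0] exI[of _ a]) force+
    next
      case False
      then have ba: "b < a" by simp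
      have x0n: "\<forall>u\<in>U. 0 \<le> x0 u" "sum x0 U = 1" using x0(1) by (auto simp: sdelta_def)
      have y0n: "\<forall>v\<in>V. 0 \<le> y0 v" "sum y0 V = 1" using y0(1) by (auto simp: sdelta_def)
      have cases: "(\<exists>v0\<in>V. (\<Sum>u\<in>U. x0 u * X u v0) < a) \<or> (\<exists>u0\<in>U. b < (\<Sum>v\<in>V. y0 v * X u0 v))"
      proof (rule ccontr)
        assume "\<not> ?thesis"
        then have h1: "\<forall>v\<in>V. a \<le> (\<Sum>u\<in>U. x0 u * X u v)" and h2: "\<forall>u\<in>U. (\<Sum>v\<in>V. y0 v * X u v) \<le> b"
          by (auto simp: not_less)
        have "a = (\<Sum>v\<in>V. y0 v * a)" using y0n by (simp add: sum_distrib_right[symmetric])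
        also have "\<dots> \<le> (\<Sum>v\<in>V. y0 v * (\<Sum>u\<in>U. x0 u * X u v))"
          using h1 y0n by (intro sum_mono mult_left_mono) auto
        also have "\<dots> = (\<Sum>u\<in>U. x0 u * (\<Sum>v\<in>V. y0 v * X u v))" by (rule double_sum)
        also have "\<dots> \<le> (\<Sum>u\<in>U. x0 u * b)"
          using h2 x0n by (intro sum_mono mult_left_mono) auto
        also have "\<dots> = b" using x0n by (simp add: sum_distrib_right[symmetric])
        finally show False using ba by simp
      qed
      show ?thesis
      proof (cases "\<exists>v0\<in>V. (\<Sum>u\<in>U. x0 u * X u v0) < a")
        case True
        then obtain v0 where v0: "v0 \<in> V" "(\<Sum>u\<in>U. x0 u * X u v0) < a" by blast
        define V' where "V' = V - {v0}"
        have V'ne: "V' \<noteq> {}"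
        proof
          assume "V' = {}"
          then have VV: "V = {v0}" using v0(1) unfolding V'_def by auto
          have "a = (\<Sum>u\<in>U. x0 u * X u v0)" unfolding a_def Fmax_def VV by simp
          then show False using v0(2) by simp
        qed
        have V'f: "finite V'" using V(1) by (simp add: V'_def)
        have "card V' < card V" unfolding V'_def by (rule card_Diff1_less[OF V(1) v0(1)])
        then have "card U + card V' < n" using n by simp
        then obtain x' y' w' where x': "x' \<in> sdelta U" and y': "y' \<in> sdelta V'"
          and w1: "\<forall>v\<in>V'. (\<Sum>u\<in>U. x' u * X u v) \<le> w'" and w2: "\<forall>u\<in>U. w' \<le> (\<Sum>v\<in>V'. y' v * X u v)"
          using less.IH[rule_format, of "card U + card V'" U V'] U V'f V'ne by blast
        define y'' where "y'' = (\<lambda>v. if v = v0 then 0 else y' v)"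
        have y'': "y'' \<in> sdelta V" unfolding y''_def by (rule sdelta_drop[OF V(1) v0(1) y'[unfolded V'_def]])
        have "Fmax V U Y y'' \<le> - w'"
        proof (rule Fmax_le[OF U])
          fix u assume u: "u\<in>U"
          have "(\<Sum>v\<in>V. y'' v * X u v) = (\<Sum>v\<in>V'. y' v * X u v)"
            unfolding y''_def V'_def by (rule sum_drop[OF V(1) v0(1)])
          then show "(\<Sum>v\<in>V. y'' v * Y v u) \<le> - w'" using w2 u unfolding negY by simp
        qed
        then have wb: "w' \<le> b" using y0(2) y'' unfolding b_def by force
        obtain t where t: "0 < t" "t \<le> 1" "(1-t) * (\<Sum>u\<in>U. x0 u * X u v0) + t * (\<Sum>u\<in>U. x' u * X u v0) < a"
          using small_t[OF v0(2)] by blast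
        define xt where "xt = (\<lambda>u. (1-t) * x0 u + t * x' u)"
        have xt: "xt \<in> sdelta U" unfolding xt_def by (rule sdelta_mix[OF x0(1) x']) (use t in auto)
        have "Fmax U V X xt < a"
        proof (rule Fmax_less[OF V])
          fix v assume v: "v\<in>V"
          show "(\<Sum>u\<in>U. xt u * X u v) < a"
          proof (cases "v = v0")
            case True then show ?thesis using t(3) unfolding xt_def sum_mix by simp
          next
            case False
            then have "v \<in> V'" using v by (simp add: V'_def)
            then have "(\<Sum>u\<in>U. x' u * X u v) < a" using w1 wb ba by fastforce
            then show ?thesis unfolding xt_def sum_mix using mix_lt[OF t(1,2) A1[OF v]] by simp
          qed
        qed
        then show ?thesis using x0(2) xt unfolding a_def by fastforce
      next
        case False
        then obtain u0 where u0: "u0 \<in> U" "b < (\<Sum>v\<in>V. y0 v * X u0 v)" using cases by blast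
        define U' where "U' = U - {u0}"
        have U'ne: "U' \<noteq> {}"
        proof
          assume "U' = {}"
          then have UU: "U = {u0}" using u0(1) unfolding U'_def by auto
          have "Fmax V U Y y0 = (\<Sum>v\<in>V. y0 v * Y v u0)" unfolding Fmax_def UU by simp
          then have "b = (\<Sum>v\<in>V. y0 v * X u0 v)" unfolding b_def negY by simp
          then show False using u0(2) by simp
        qed
        have U'f: "finite U'" using U(1) by (simp add: U'_def)
        have "card U' < card U" unfolding U'_def by (rule card_Diff1_less[OF U(1) u0(1)])
        then have "card U' + card V < n" using n by simp
        then obtain x' y' w' where x': "x' \<in> sdelta U'" and y': "y' \<in> sdelta V"
          and w1: "\<forall>v\<in>V. (\<Sum>u\<in>U'. x' u * X u v) \<le> w'" and w2: "\<forall>u\<in>U'. w' \<le> (\<Sum>v\<in>V. y' v * X u v)"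
          using less.IH[rule_format, of "card U' + card V" U' V] U'f U'ne V by blast
        define x'' where "x'' = (\<lambda>u. if u = u0 then 0 else x' u)"
        have x'': "x'' \<in> sdelta U" unfolding x''_def by (rule sdelta_drop[OF U(1) u0(1) x'[unfolded U'_def]])
        have "Fmax U V X x'' \<le> w'"
        proof (rule Fmax_le[OF V])
          fix v assume v: "v\<in>V"
          have "(\<Sum>u\<in>U. x'' u * X u v) = (\<Sum>u\<in>U'. x' u * X u v)"
            unfolding x''_def U'_def by (rule sum_drop[OF U(1) u0(1)])
          then show "(\<Sum>u\<in>U. x'' u * X u v) \<le> w'" using w1 v by simp
        qed
        then have aw: "a \<le> w'" using x0(2) x'' unfolding a_def by force
        have "- (\<Sum>v\<in>V. y0 v * X u0 v) < - b" using u0(2) by simp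
        then obtain t where t: "0 < t" "t \<le> 1" "(1-t) * (- (\<Sum>v\<in>V. y0 v * X u0 v)) + t * (- (\<Sum>v\<in>V. y' v * X u0 v)) < - b"
          using small_t by blast
        define yt where "yt = (\<lambda>v. (1-t) * y0 v + t * y' v)"
        have yt: "yt \<in> sdelta V" unfolding yt_def by (rule sdelta_mix[OF y0(1) y']) (use t in auto)
        have "Fmax V U Y yt < - b"
        proof (rule Fmax_less[OF U])
          fix u assume u: "u\<in>U"
          have ey: "(\<Sum>v\<in>V. yt v * Y v u) = (1-t) * (- (\<Sum>v\<in>V. y0 v * X u v)) + t * (- (\<Sum>v\<in>V. y' v * X u v))"
            unfolding yt_def sum_mix negY by simp
          show "(\<Sum>v\<in>V. yt v * Y v u) < - b"
          proof (cases "u = u0")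
            case True then show ?thesis using t(3) ey by simp
          next
            case False
            then have "u \<in> U'" using u by (simp add: U'_def)
            then have "- (\<Sum>v\<in>V. y' v * X u v) < - b" using w2 aw ba by fastforce
            moreover have "- (\<Sum>v\<in>V. y0 v * X u v) \<le> - b" using B1[OF u] by simp
            ultimately show ?thesis unfolding ey using mix_lt[OF t(1,2)] by blast
          qed
        qed
        then show ?thesis using y0(2) yt unfolding b_def by fastforce
      qed
    qed
  qed
qed

lemma minimax:
  fixes X :: "'a \<Rightarrow> 'b \<Rightarrow> real"
  assumes "finite U" "U \<noteq> {}" "finite V" "V \<noteq> {}"
  shows "\<exists>x\<in>sdelta U. \<exists>y\<in>sdelta V. \<exists>w. (\<forall>v\<in>V. (\<Sum>u\<in>U. x u * X u v) \<le> w) \<and> (\<forall>u\<in>U. w \<le> (\<Sum>v\<in>V. y v * X u v))"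
  using minimax_aux[of "card U + card V" X] assms by blast


lemma St_fin: "finite (St G)" by (simp add: St_def)
lemma St_0: "0 \<notin> St G" by (simp add: St_def)
lemma St_ne0: "i \<in> St G \<Longrightarrow> i \<noteq> 0" using St_0[of G] by metis
lemma So_St: "So G = insert 0 (St G)" by (auto simp: So_def St_def)
lemma St_So: "St G \<subseteq> So G" by (auto simp: So_def St_def)

lemma wfD:
  assumes "wf_game G" "i \<in> St G"
  shows "finite (Uc G i)" "Uc G i \<noteq> {}" "finite (Vc G i)" "Vc G i \<noteq> {}"
  using assms by (auto simp: wf_game_def)

lemma wf_tp:
  assumes "wf_game G" "i \<in> St G" "u \<in> Uc G i" "v \<in> Vc G i" "j \<in> So G"
  shows "0 \<le> tp G i u v j"
  using assms by (auto simp: wf_game_def)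

lemma wf_tp_sum:
  assumes "wf_game G" "i \<in> St G" "u \<in> Uc G i" "v \<in> Vc G i"
  shows "(\<Sum>j\<in>St G. tp G i u v j) \<le> 1"
proof -
  have "(\<Sum>j\<in>So G. tp G i u v j) = 1" using assms by (auto simp: wf_game_def)
  moreover have "(\<Sum>j\<in>So G. tp G i u v j) = tp G i u v 0 + (\<Sum>j\<in>St G. tp G i u v j)"
    unfolding So_St by (rule sum.insert[OF St_fin St_0])
  moreover have "0 \<le> tp G i u v 0" using wf_tp[OF assms] by (simp add: So_def)
  ultimately show ?thesis by linarith
qed

definition kq :: "('u,'v) ssp_game \<Rightarrow> 'u pmf \<Rightarrow> 'v pmf \<Rightarrow> nat \<Rightarrow> nat \<Rightarrow> real" where
  "kq G \<rho> \<sigma> i j = (\<Sum>u\<in>Uc G i. \<Sum>v\<in>Vc G i. pmf \<rho> u * pmf \<sigma> v * tp G i u v j)"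

definition kc :: "('u,'v) ssp_game \<Rightarrow> 'u pmf \<Rightarrow> 'v pmf \<Rightarrow> nat \<Rightarrow> real" where
  "kc G \<rho> \<sigma> i = (\<Sum>u\<in>Uc G i. \<Sum>v\<in>Vc G i. pmf \<rho> u * pmf \<sigma> v * gcost G i u v)"

lemma split_Q:
  "(\<Sum>u\<in>Uc G i. \<Sum>v\<in>Vc G i. pmf \<rho> u * pmf \<sigma> v * (gcost G i u v + (\<Sum>j\<in>St G. tp G i u v j * W j)))
   = kc G \<rho> \<sigma> i + (\<Sum>j\<in>St G. kq G \<rho> \<sigma> i j * W j)"
proof -
  have "(\<Sum>u\<in>Uc G i. \<Sum>v\<in>Vc G i. pmf \<rho> u * pmf \<sigma> v * (gcost G i u v + (\<Sum>j\<in>St G. tp G i u v j * W j)))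
    = kc G \<rho> \<sigma> i + (\<Sum>u\<in>Uc G i. \<Sum>v\<in>Vc G i. \<Sum>j\<in>St G. pmf \<rho> u * pmf \<sigma> v * tp G i u v j * W j)"
  proof -
    have e: "pmf \<rho> u * pmf \<sigma> v * (gcost G i u v + (\<Sum>j\<in>St G. tp G i u v j * W j))
        = pmf \<rho> u * pmf \<sigma> v * gcost G i u v + (\<Sum>j\<in>St G. pmf \<rho> u * pmf \<sigma> v * tp G i u v j * W j)" for u v
      by (simp only: distrib_left sum_distrib_left mult.assoc)
    show ?thesis unfolding kc_def e by (simp only: sum.distrib)
  qed
  also have "(\<Sum>u\<in>Uc G i. \<Sum>v\<in>Vc G i. \<Sum>j\<in>St G. pmf \<rho> u * pmf \<sigma> v * tp G i u v j * W j)
     = (\<Sum>j\<in>St G. kq G \<rho> \<sigma> i j * W j)"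
    unfolding kq_def sum_distrib_right
    by (subst sum.swap, rule sum.cong[OF refl], subst sum.swap, rule refl)
  finally show ?thesis .
qed

lemma Qval_split: "Qval G J i \<rho> \<sigma> = kc G \<rho> \<sigma> i + (\<Sum>j\<in>St G. kq G \<rho> \<sigma> i j * J j)"
  unfolding Qval_def by (rule split_Q)

lemma pmf_sum1: "finite A \<Longrightarrow> set_pmf p \<subseteq> A \<Longrightarrow> (\<Sum>a\<in>A. pmf p a) = 1"
  by (rule sum_pmf_eq_1)

lemma kq_kern:
  assumes wf: "wf_game G" and i: "i \<in> St G" and r: "\<rho> \<in> Ubar G i" and s: "\<sigma> \<in> Vbar G i"
  shows "\<forall>j\<in>St G. 0 \<le> kq G \<rho> \<sigma> i j" "(\<Sum>j\<in>St G. kq G \<rho> \<sigma> i j) \<le> 1"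
proof -
  show "\<forall>j\<in>St G. 0 \<le> kq G \<rho> \<sigma> i j"
  proof
    fix j assume j: "j \<in> St G"
    then have jo: "j \<in> So G" using St_So by blast
    show "0 \<le> kq G \<rho> \<sigma> i j" unfolding kq_def
    proof (intro sum_nonneg)
      fix u v assume "u \<in> Uc G i" "v \<in> Vc G i"
      then show "0 \<le> pmf \<rho> u * pmf \<sigma> v * tp G i u v j" using wf_tp[OF wf i _ _ jo] by simp
    qed
  qed
  have "(\<Sum>j\<in>St G. kq G \<rho> \<sigma> i j) = (\<Sum>u\<in>Uc G i. \<Sum>v\<in>Vc G i. pmf \<rho> u * pmf \<sigma> v * (\<Sum>j\<in>St G. tp G i u v j))"
    unfolding kq_def sum_distrib_left
    by (subst sum.swap, rule sum.cong[OF refl], subst sum.swap, rule refl)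
  also have "\<dots> \<le> (\<Sum>u\<in>Uc G i. \<Sum>v\<in>Vc G i. pmf \<rho> u * pmf \<sigma> v * 1)"
  proof (intro sum_mono)
    fix u v assume "u \<in> Uc G i" "v \<in> Vc G i"
    then show "pmf \<rho> u * pmf \<sigma> v * (\<Sum>j\<in>St G. tp G i u v j) \<le> pmf \<rho> u * pmf \<sigma> v * 1"
      using wf_tp_sum[OF wf i] by (intro mult_left_mono) auto
  qed
  also have "\<dots> = (\<Sum>u\<in>Uc G i. pmf \<rho> u) * (\<Sum>v\<in>Vc G i. pmf \<sigma> v)"
    by (simp only: sum_product mult_1_right)
  also have "\<dots> = 1"
  proof -
    have "(\<Sum>u\<in>Uc G i. pmf \<rho> u) = 1" using r wfD[OF wf i] by (intro pmf_sum1) (auto simp: Ubar_def)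
    moreover have "(\<Sum>v\<in>Vc G i. pmf \<sigma> v) = 1" using s wfD[OF wf i] by (intro pmf_sum1) (auto simp: Vbar_def)
    ultimately show ?thesis by simp
  qed
  finally show "(\<Sum>j\<in>St G. kq G \<rho> \<sigma> i j) \<le> 1" .
qed

definition pq :: "('u,'v) ssp_game \<Rightarrow> (nat \<Rightarrow> 'u pmf) \<Rightarrow> (nat \<Rightarrow> 'v pmf) \<Rightarrow> nat \<Rightarrow> nat \<Rightarrow> real" where
  "pq G \<mu> \<nu> = (\<lambda>i j. kq G (\<mu> i) (\<nu> i) i j)"

definition pc :: "('u,'v) ssp_game \<Rightarrow> (nat \<Rightarrow> 'u pmf) \<Rightarrow> (nat \<Rightarrow> 'v pmf) \<Rightarrow> nat \<Rightarrow> real" where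
  "pc G \<mu> \<nu> = (\<lambda>i. kc G (\<mu> i) (\<nu> i) i)"

lemma SR1_Ubar: "\<mu> \<in> SR1 G \<Longrightarrow> i \<in> St G \<Longrightarrow> \<mu> i \<in> Ubar G i"
  by (simp add: SR1_def Ubar_def)
lemma SR2_Vbar: "\<nu> \<in> SR2 G \<Longrightarrow> i \<in> St G \<Longrightarrow> \<nu> i \<in> Vbar G i"
  by (simp add: SR2_def Vbar_def)

lemma pq_kern: "wf_game G \<Longrightarrow> \<mu> \<in> SR1 G \<Longrightarrow> \<nu> \<in> SR2 G \<Longrightarrow> kern (St G) (pq G \<mu> \<nu>)"
proof -
  assume a: "wf_game G" "\<mu> \<in> SR1 G" "\<nu> \<in> SR2 G"
  have "\<forall>i\<in>St G. (\<forall>j\<in>St G. 0 \<le> kq G (\<mu> i) (\<nu> i) i j) \<and> (\<Sum>j\<in>St G. kq G (\<mu> i) (\<nu> i) i j) \<le> 1"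
    using kq_kern[OF a(1) _ SR1_Ubar[OF a(2)] SR2_Vbar[OF a(3)]] by blast
  then show ?thesis unfolding kern_def pq_def using St_fin by blast
qed

lemma stat_app: "stat \<mu> h i = \<mu> i" by (simp add: stat_def)

lemma costN_zero: "costN G \<pi>1 \<pi>2 k h 0 = 0"
  by (cases k) auto

lemma survN_zero: "survN G \<pi>1 \<pi>2 k h 0 = 0"
  by (cases k) auto

lemma costN_step:
  assumes "i \<in> St G"
  shows "costN G \<pi>1 \<pi>2 (Suc k) h i = (\<Sum>u\<in>Uc G i. \<Sum>v\<in>Vc G i. pmf (\<pi>1 h i) u * pmf (\<pi>2 h i) v *
            (gcost G i u v + (\<Sum>j\<in>St G. tp G i u v j * costN G \<pi>1 \<pi>2 k (h @ [(i,u,v)]) j)))"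
proof -
  have i0: "i \<noteq> 0" using assms by (rule St_ne0)
  have e: "(\<Sum>j\<in>So G. tp G i u v j * (tc G i u v j + costN G \<pi>1 \<pi>2 k (h @ [(i,u,v)]) j))
        = gcost G i u v + (\<Sum>j\<in>St G. tp G i u v j * costN G \<pi>1 \<pi>2 k (h @ [(i,u,v)]) j)" for u v
  proof -
    have "(\<Sum>j\<in>So G. tp G i u v j * (tc G i u v j + costN G \<pi>1 \<pi>2 k (h @ [(i,u,v)]) j))
        = gcost G i u v + (\<Sum>j\<in>So G. tp G i u v j * costN G \<pi>1 \<pi>2 k (h @ [(i,u,v)]) j)"
      unfolding gcost_def by (simp add: distrib_left sum.distrib)
    also have "(\<Sum>j\<in>So G. tp G i u v j * costN G \<pi>1 \<pi>2 k (h @ [(i,u,v)]) j)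
        = (\<Sum>j\<in>St G. tp G i u v j * costN G \<pi>1 \<pi>2 k (h @ [(i,u,v)]) j)"
      unfolding So_St by (simp add: sum.insert[OF St_fin St_0] costN_zero)
    finally show ?thesis .
  qed
  show ?thesis using i0 by (simp add: e)
qed

lemma survN_step:
  assumes "i \<in> St G"
  shows "survN G \<pi>1 \<pi>2 (Suc k) h i = (\<Sum>u\<in>Uc G i. \<Sum>v\<in>Vc G i. pmf (\<pi>1 h i) u * pmf (\<pi>2 h i) v *
            (\<Sum>j\<in>St G. tp G i u v j * survN G \<pi>1 \<pi>2 k (h @ [(i,u,v)]) j))"
proof -
  have i0: "i \<noteq> 0" using assms by (rule St_ne0)
  have e: "(\<Sum>j\<in>So G. tp G i u v j * survN G \<pi>1 \<pi>2 k (h @ [(i,u,v)]) j)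
        = (\<Sum>j\<in>St G. tp G i u v j * survN G \<pi>1 \<pi>2 k (h @ [(i,u,v)]) j)" for u v
    unfolding So_St by (simp add: sum.insert[OF St_fin St_0] survN_zero)
  show ?thesis using i0 by (simp add: e)
qed

lemma stat_costN:
  assumes "i \<in> St G"
  shows "costN G (stat \<mu>) (stat \<nu>) k h i = (Lop (St G) (pq G \<mu> \<nu>) (pc G \<mu> \<nu>) ^^ k) (\<lambda>_. 0) i"
  using assms
proof (induction k arbitrary: h i)
  case 0 then show ?case by simp
next
  case (Suc k)
  have "costN G (stat \<mu>) (stat \<nu>) (Suc k) h i = (\<Sum>u\<in>Uc G i. \<Sum>v\<in>Vc G i. pmf (\<mu> i) u * pmf (\<nu> i) v *
            (gcost G i u v + (\<Sum>j\<in>St G. tp G i u v j * (Lop (St G) (pq G \<mu> \<nu>) (pc G \<mu> \<nu>) ^^ k) (\<lambda>_. 0) j)))"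
    unfolding costN_step[OF Suc.prems] by (simp add: stat_app Suc.IH cong: sum.cong)
  also have "\<dots> = (Lop (St G) (pq G \<mu> \<nu>) (pc G \<mu> \<nu>) ^^ Suc k) (\<lambda>_. 0) i"
    unfolding split_Q by (simp add: Lop_def pq_def pc_def)
  finally show ?case .
qed

lemma stat_survN:
  assumes "i \<in> St G"
  shows "survN G (stat \<mu>) (stat \<nu>) k h i = surv (St G) (pq G \<mu> \<nu>) k i"
  using assms
proof (induction k arbitrary: h i)
  case 0 then show ?case using St_ne0[OF 0] by (simp add: surv_def)
next
  case (Suc k)
  have "survN G (stat \<mu>) (stat \<nu>) (Suc k) h i = (\<Sum>u\<in>Uc G i. \<Sum>v\<in>Vc G i. pmf (\<mu> i) u * pmf (\<nu> i) v *
            (\<Sum>j\<in>St G. tp G i u v j * surv (St G) (pq G \<mu> \<nu>) k j))"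
    unfolding survN_step[OF Suc.prems] by (simp add: stat_app Suc.IH cong: sum.cong)
  also have "\<dots> = (\<Sum>j\<in>St G. pq G \<mu> \<nu> i j * surv (St G) (pq G \<mu> \<nu>) k j)"
    unfolding pq_def kq_def sum_distrib_right sum_distrib_left
    by (subst sum.swap, rule sum.cong[OF refl], subst sum.swap, rule sum.cong[OF refl], rule sum.cong[OF refl]) (simp add: mult.assoc)
  also have "\<dots> = surv (St G) (pq G \<mu> \<nu>) (Suc k) i" by (simp add: surv_def Pop_def)
  finally show ?case .
qed


lemma sum_return: "finite V \<Longrightarrow> v \<in> V \<Longrightarrow> (\<Sum>v'\<in>V. pmf (return_pmf v) v' * g v') = (g v :: real)"
proof -
  assume a: "finite V" "v \<in> V"
  have "(\<Sum>v'\<in>V. pmf (return_pmf v) v' * g v') = (\<Sum>v'\<in>V. if v' = v then g v' else 0)"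
    by (rule sum.cong) (auto simp: pmf_return)
  also have "\<dots> = g v" using a by (simp add: sum.delta)
  finally show ?thesis .
qed

definition ZZ :: "('u,'v) ssp_game \<Rightarrow> (nat \<Rightarrow> real) \<Rightarrow> nat \<Rightarrow> 'u \<Rightarrow> 'v \<Rightarrow> real" where
  "ZZ G J i u v = gcost G i u v + (\<Sum>j\<in>St G. tp G i u v j * J j)"

lemma Qval_ZZ: "Qval G J i \<rho> \<sigma> = (\<Sum>u\<in>Uc G i. \<Sum>v\<in>Vc G i. pmf \<rho> u * pmf \<sigma> v * ZZ G J i u v)"
  by (simp add: Qval_def ZZ_def)

lemma Q_ret_v: "wf_game G \<Longrightarrow> i \<in> St G \<Longrightarrow> v \<in> Vc G i \<Longrightarrow>
    Qval G J i \<rho> (return_pmf v) = (\<Sum>u\<in>Uc G i. pmf \<rho> u * ZZ G J i u v)"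
proof -
  assume a: "wf_game G" "i \<in> St G" "v \<in> Vc G i"
  have "Qval G J i \<rho> (return_pmf v) = (\<Sum>u\<in>Uc G i. pmf \<rho> u * (\<Sum>v'\<in>Vc G i. pmf (return_pmf v) v' * ZZ G J i u v'))"
    unfolding Qval_ZZ by (simp add: sum_distrib_left mult.assoc)
  also have "\<dots> = (\<Sum>u\<in>Uc G i. pmf \<rho> u * ZZ G J i u v)"
    using sum_return[OF wfD(3)[OF a(1,2)] a(3)] by simp
  finally show ?thesis .
qed

lemma Q_ret_u: "wf_game G \<Longrightarrow> i \<in> St G \<Longrightarrow> u \<in> Uc G i \<Longrightarrow>
    Qval G J i (return_pmf u) \<sigma> = (\<Sum>v\<in>Vc G i. pmf \<sigma> v * ZZ G J i u v)"
proof -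
  assume a: "wf_game G" "i \<in> St G" "u \<in> Uc G i"
  have "Qval G J i (return_pmf u) \<sigma> = (\<Sum>v\<in>Vc G i. pmf \<sigma> v * (\<Sum>u'\<in>Uc G i. pmf (return_pmf u) u' * ZZ G J i u' v))"
    unfolding Qval_ZZ by (subst sum.swap) (simp add: sum_distrib_left mult.assoc mult.left_commute)
  also have "\<dots> = (\<Sum>v\<in>Vc G i. pmf \<sigma> v * ZZ G J i u v)"
    using sum_return[OF wfD(1)[OF a(1,2)] a(3)] by simp
  finally show ?thesis .
qed

lemma Q_pure_v: "wf_game G \<Longrightarrow> i \<in> St G \<Longrightarrow>
    Qval G J i \<rho> \<sigma> = (\<Sum>v\<in>Vc G i. pmf \<sigma> v * Qval G J i \<rho> (return_pmf v))"
proof -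
  assume a: "wf_game G" "i \<in> St G"
  have "(\<Sum>v\<in>Vc G i. pmf \<sigma> v * Qval G J i \<rho> (return_pmf v)) = (\<Sum>v\<in>Vc G i. pmf \<sigma> v * (\<Sum>u\<in>Uc G i. pmf \<rho> u * ZZ G J i u v))"
    by (rule sum.cong) (simp_all add: Q_ret_v[OF a])
  also have "\<dots> = Qval G J i \<rho> \<sigma>"
    unfolding Qval_ZZ by (subst sum.swap) (simp add: sum_distrib_left mult.assoc mult.left_commute)
  finally show ?thesis by simp
qed

lemma Q_pure_u: "wf_game G \<Longrightarrow> i \<in> St G \<Longrightarrow>
    Qval G J i \<rho> \<sigma> = (\<Sum>u\<in>Uc G i. pmf \<rho> u * Qval G J i (return_pmf u) \<sigma>)"
proof -
  assume a: "wf_game G" "i \<in> St G"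
  have "(\<Sum>u\<in>Uc G i. pmf \<rho> u * Qval G J i (return_pmf u) \<sigma>) = (\<Sum>u\<in>Uc G i. pmf \<rho> u * (\<Sum>v\<in>Vc G i. pmf \<sigma> v * ZZ G J i u v))"
    by (rule sum.cong) (simp_all add: Q_ret_u[OF a])
  also have "\<dots> = Qval G J i \<rho> \<sigma>"
    unfolding Qval_ZZ by (simp add: sum_distrib_left mult.assoc mult.left_commute)
  finally show ?thesis by simp
qed

lemma conv_le_Max:
  assumes "finite A" "set_pmf p \<subseteq> A" "A \<noteq> {}"
  shows "(\<Sum>a\<in>A. pmf p a * f a) \<le> Max (f ` A)"
proof -
  have "(\<Sum>a\<in>A. pmf p a * f a) \<le> (\<Sum>a\<in>A. pmf p a * Max (f ` A))"
    using assms by (intro sum_mono mult_left_mono) auto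
  also have "\<dots> = Max (f ` A)" using pmf_sum1[OF assms(1,2)] by (simp add: sum_distrib_right[symmetric])
  finally show ?thesis .
qed

lemma conv_ge_Min:
  assumes "finite A" "set_pmf p \<subseteq> A" "A \<noteq> {}"
  shows "Min (f ` A) \<le> (\<Sum>a\<in>A. pmf p a * f a)"
proof -
  have "Min (f ` A) = (\<Sum>a\<in>A. pmf p a * Min (f ` A))" using pmf_sum1[OF assms(1,2)] by (simp add: sum_distrib_right[symmetric])
  also have "\<dots> \<le> (\<Sum>a\<in>A. pmf p a * f a)"
    using assms by (intro sum_mono mult_left_mono) auto
  finally show ?thesis .
qed

lemma Qval_le_Max:
  assumes "wf_game G" "i \<in> St G" "\<sigma> \<in> Vbar G i"
  shows "Qval G J i \<rho> \<sigma> \<le> Max ((\<lambda>v. Qval G J i \<rho> (return_pmf v)) ` Vc G i)"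
  unfolding Q_pure_v[OF assms(1,2), of J \<rho> \<sigma>]
  using assms wfD[OF assms(1,2)] by (intro conv_le_Max) (auto simp: Vbar_def)

lemma Qval_ge_Min:
  assumes "wf_game G" "i \<in> St G" "\<rho> \<in> Ubar G i"
  shows "Min ((\<lambda>u. Qval G J i (return_pmf u) \<sigma>) ` Uc G i) \<le> Qval G J i \<rho> \<sigma>"
  unfolding Q_pure_u[OF assms(1,2), of J \<rho> \<sigma>]
  using assms wfD[OF assms(1,2)] by (intro conv_ge_Min) (auto simp: Ubar_def)

lemma SUP_Max:
  assumes "wf_game G" "i \<in> St G"
  shows "(SUP \<sigma>\<in>Vbar G i. Qval G J i \<rho> \<sigma>) = Max ((\<lambda>v. Qval G J i \<rho> (return_pmf v)) ` Vc G i)"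
proof (rule cSup_eq_maximum)
  have "Max ((\<lambda>v. Qval G J i \<rho> (return_pmf v)) ` Vc G i) \<in> (\<lambda>v. Qval G J i \<rho> (return_pmf v)) ` Vc G i"
    using wfD[OF assms] by (intro Max_in) auto
  then obtain v where v: "v \<in> Vc G i" "Max ((\<lambda>v. Qval G J i \<rho> (return_pmf v)) ` Vc G i) = Qval G J i \<rho> (return_pmf v)"
    by auto
  have "return_pmf v \<in> Vbar G i" using v(1) by (simp add: Vbar_def)
  then show "Max ((\<lambda>v. Qval G J i \<rho> (return_pmf v)) ` Vc G i) \<in> (\<lambda>\<sigma>. Qval G J i \<rho> \<sigma>) ` Vbar G i"
    using v(2) by auto
next
  fix x assume "x \<in> (\<lambda>\<sigma>. Qval G J i \<rho> \<sigma>) ` Vbar G i"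
  then show "x \<le> Max ((\<lambda>v. Qval G J i \<rho> (return_pmf v)) ` Vc G i)"
    using Qval_le_Max[OF assms] by auto
qed

lemma INF_Min:
  assumes "wf_game G" "i \<in> St G"
  shows "(INF \<rho>\<in>Ubar G i. Qval G J i \<rho> \<sigma>) = Min ((\<lambda>u. Qval G J i (return_pmf u) \<sigma>) ` Uc G i)"
proof (rule cInf_eq_minimum)
  have "Min ((\<lambda>u. Qval G J i (return_pmf u) \<sigma>) ` Uc G i) \<in> (\<lambda>u. Qval G J i (return_pmf u) \<sigma>) ` Uc G i"
    using wfD[OF assms] by (intro Min_in) auto
  then obtain u where u: "u \<in> Uc G i" "Min ((\<lambda>u. Qval G J i (return_pmf u) \<sigma>) ` Uc G i) = Qval G J i (return_pmf u) \<sigma>"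
    by auto
  have "return_pmf u \<in> Ubar G i" using u(1) by (simp add: Ubar_def)
  then show "Min ((\<lambda>u. Qval G J i (return_pmf u) \<sigma>) ` Uc G i) \<in> (\<lambda>\<rho>. Qval G J i \<rho> \<sigma>) ` Ubar G i"
    using u(2) by auto
next
  fix x assume "x \<in> (\<lambda>\<rho>. Qval G J i \<rho> \<sigma>) ` Ubar G i"
  then show "Min ((\<lambda>u. Qval G J i (return_pmf u) \<sigma>) ` Uc G i) \<le> x"
    using Qval_ge_Min[OF assms] by auto
qed

lemma Tmu_Max: "wf_game G \<Longrightarrow> i \<in> St G \<Longrightarrow> Tmu G \<mu> J i = Max ((\<lambda>v. Qval G J i (\<mu> i) (return_pmf v)) ` Vc G i)"
  unfolding Tmu_def by (rule SUP_Max)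

lemma Tnu_Min: "wf_game G \<Longrightarrow> i \<in> St G \<Longrightarrow> Tnu G \<nu> J i = Min ((\<lambda>u. Qval G J i (return_pmf u) (\<nu> i)) ` Uc G i)"
  unfolding Tnu_def by (rule INF_Min)

lemma Qval_le_Tmu: "wf_game G \<Longrightarrow> i \<in> St G \<Longrightarrow> \<sigma> \<in> Vbar G i \<Longrightarrow> Qval G J i (\<mu> i) \<sigma> \<le> Tmu G \<mu> J i"
  using Qval_le_Max Tmu_Max by metis

lemma Tnu_le_Qval: "wf_game G \<Longrightarrow> i \<in> St G \<Longrightarrow> \<rho> \<in> Ubar G i \<Longrightarrow> Tnu G \<nu> J i \<le> Qval G J i \<rho> (\<nu> i)"
  using Qval_ge_Min Tnu_Min by metis

lemma Tmu_attain: assumes "wf_game G" "i \<in> St G" shows "\<exists>v\<in>Vc G i. Tmu G \<mu> J i = Qval G J i (\<mu> i) (return_pmf v)"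
proof -
  have "Max ((\<lambda>v. Qval G J i (\<mu> i) (return_pmf v)) ` Vc G i) \<in> (\<lambda>v. Qval G J i (\<mu> i) (return_pmf v)) ` Vc G i"
    using wfD[OF assms] by (intro Max_in) auto
  then show ?thesis unfolding Tmu_Max[OF assms] by auto
qed

lemma Tnu_attain: assumes "wf_game G" "i \<in> St G" shows "\<exists>u\<in>Uc G i. Tnu G \<nu> J i = Qval G J i (return_pmf u) (\<nu> i)"
proof -
  have "Min ((\<lambda>u. Qval G J i (return_pmf u) (\<nu> i)) ` Uc G i) \<in> (\<lambda>u. Qval G J i (return_pmf u) (\<nu> i)) ` Uc G i"
    using wfD[OF assms] by (intro Min_in) auto
  then show ?thesis unfolding Tnu_Min[OF assms] by auto
qed

lemma Qval_mono:
  assumes wf: "wf_game G" and i: "i \<in> St G" and r: "\<rho> \<in> Ubar G i" and s: "\<sigma> \<in> Vbar G i"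
    and le: "\<And>j. j \<in> St G \<Longrightarrow> J j \<le> J' j"
  shows "Qval G J i \<rho> \<sigma> \<le> Qval G J' i \<rho> \<sigma>"
  unfolding Qval_split using kq_kern(1)[OF wf i r s] le by (auto intro!: sum_mono mult_left_mono)

lemma Qval_nonexp:
  assumes wf: "wf_game G" and i: "i \<in> St G" and r: "\<rho> \<in> Ubar G i" and s: "\<sigma> \<in> Vbar G i"
    and le: "\<And>j. j \<in> St G \<Longrightarrow> \<bar>J j - J' j\<bar> \<le> e"
  shows "\<bar>Qval G J i \<rho> \<sigma> - Qval G J' i \<rho> \<sigma>\<bar> \<le> e"
proof -
  have "\<bar>J i - J' i\<bar> \<le> e" by (rule le[OF i])
  then have e0: "0 \<le> e" by linarith
  have "\<bar>Qval G J i \<rho> \<sigma> - Qval G J' i \<rho> \<sigma>\<bar> = \<bar>\<Sum>j\<in>St G. kq G \<rho> \<sigma> i j * (J j - J' j)\<bar>"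
    unfolding Qval_split by (simp add: sum_subtractf algebra_simps)
  also have "\<dots> \<le> (\<Sum>j\<in>St G. \<bar>kq G \<rho> \<sigma> i j * (J j - J' j)\<bar>)" by (rule sum_abs)
  also have "\<dots> \<le> (\<Sum>j\<in>St G. kq G \<rho> \<sigma> i j * e)"
  proof (rule sum_mono)
    fix j assume j: "j \<in> St G"
    have "0 \<le> kq G \<rho> \<sigma> i j" using kq_kern(1)[OF wf i r s] j by blast
    then show "\<bar>kq G \<rho> \<sigma> i j * (J j - J' j)\<bar> \<le> kq G \<rho> \<sigma> i j * e"
      using le[OF j] by (simp add: abs_mult mult_left_mono)
  qed
  also have "\<dots> = (\<Sum>j\<in>St G. kq G \<rho> \<sigma> i j) * e" by (simp add: sum_distrib_right)
  also have "\<dots> \<le> 1 * e" using kq_kern(2)[OF wf i r s] e0 by (intro mult_right_mono) simp_all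
  finally show ?thesis by simp
qed


lemma pmf_from:
  fixes x :: "'a \<Rightarrow> real"
  assumes U: "finite U" and x: "x \<in> sdelta U"
  shows "\<exists>\<rho>. set_pmf \<rho> \<subseteq> U \<and> (\<forall>u\<in>U. pmf \<rho> u = x u)"
proof -
  define f where "f u = (if u \<in> U then x u else 0)" for u
  have f0: "0 \<le> f u" for u using x by (auto simp: f_def sdelta_def)
  have "(\<integral>\<^sup>+ u. ennreal (f u) \<partial>count_space UNIV) = (\<Sum>u\<in>U. ennreal (f u))"
    by (rule nn_integral_count_space'[OF U]) (auto simp: f_def)
  also have "\<dots> = ennreal (\<Sum>u\<in>U. f u)" by (rule sum_ennreal) (rule f0)
  also have "(\<Sum>u\<in>U. f u) = 1" using x by (simp add: f_def sdelta_def)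
  finally have int: "(\<integral>\<^sup>+ u. ennreal (f u) \<partial>count_space UNIV) = 1" by simp
  define \<rho> where "\<rho> = embed_pmf f"
  have p: "pmf \<rho> u = f u" for u unfolding \<rho>_def by (rule pmf_embed_pmf[OF f0 int])
  have "set_pmf \<rho> \<subseteq> U" unfolding set_pmf_eq using p by (auto simp: f_def)
  moreover have "\<forall>u\<in>U. pmf \<rho> u = x u" using p by (simp add: f_def)
  ultimately show ?thesis by blast
qed

lemma saddle:
  assumes wf: "wf_game G" and i: "i \<in> St G"
  shows "\<exists>\<rho>\<in>Ubar G i. \<exists>\<sigma>\<in>Vbar G i. (\<forall>\<sigma>'\<in>Vbar G i. Qval G J i \<rho> \<sigma>' \<le> Top G J i) \<and>
            (\<forall>\<rho>'\<in>Ubar G i. Top G J i \<le> Qval G J i \<rho>' \<sigma>)"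
proof -
  note fin = wfD[OF wf i]
  define Z where "Z u v = Qval G J i (return_pmf u) (return_pmf v)" for u v
  obtain x y w where x: "x \<in> sdelta (Uc G i)" and y: "y \<in> sdelta (Vc G i)"
    and xw: "\<forall>v\<in>Vc G i. (\<Sum>u\<in>Uc G i. x u * Z u v) \<le> w" and yw: "\<forall>u\<in>Uc G i. w \<le> (\<Sum>v\<in>Vc G i. y v * Z u v)"
    using minimax[OF fin, of Z] by blast
  obtain \<rho>0 where r0: "set_pmf \<rho>0 \<subseteq> Uc G i" "\<forall>u\<in>Uc G i. pmf \<rho>0 u = x u" using pmf_from[OF fin(1) x] by blast
  obtain \<sigma>0 where s0: "set_pmf \<sigma>0 \<subseteq> Vc G i" "\<forall>v\<in>Vc G i. pmf \<sigma>0 v = y v" using pmf_from[OF fin(3) y] by blast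
  have r0U: "\<rho>0 \<in> Ubar G i" using r0 by (simp add: Ubar_def)
  have s0V: "\<sigma>0 \<in> Vbar G i" using s0 by (simp add: Vbar_def)
  have dbl: "Qval G J i \<rho> \<sigma> = (\<Sum>u\<in>Uc G i. pmf \<rho> u * (\<Sum>v\<in>Vc G i. pmf \<sigma> v * Z u v))" for \<rho> \<sigma>
  proof -
    have "Qval G J i \<rho> \<sigma> = (\<Sum>u\<in>Uc G i. pmf \<rho> u * Qval G J i (return_pmf u) \<sigma>)" by (rule Q_pure_u[OF wf i])
    also have "\<dots> = (\<Sum>u\<in>Uc G i. pmf \<rho> u * (\<Sum>v\<in>Vc G i. pmf \<sigma> v * Z u v))"
      unfolding Z_def by (subst Q_pure_v[OF wf i]) (rule refl)
    finally show ?thesis .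
  qed
  have up: "Qval G J i \<rho>0 \<sigma>' \<le> w" if s: "\<sigma>' \<in> Vbar G i" for \<sigma>'
  proof -
    have "Qval G J i \<rho>0 \<sigma>' = (\<Sum>v\<in>Vc G i. pmf \<sigma>' v * (\<Sum>u\<in>Uc G i. x u * Z u v))"
      unfolding dbl using r0(2) by (subst double_sum[symmetric]) (simp add: cong: sum.cong)
    also have "\<dots> \<le> (\<Sum>v\<in>Vc G i. pmf \<sigma>' v * w)" using xw by (intro sum_mono mult_left_mono) auto
    also have "\<dots> = w" using s fin pmf_sum1[of "Vc G i" \<sigma>'] by (simp add: Vbar_def sum_distrib_right[symmetric])
    finally show ?thesis .
  qed
  have lo: "w \<le> Qval G J i \<rho>' \<sigma>0" if r: "\<rho>' \<in> Ubar G i" for \<rho>'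
  proof -
    have "w = (\<Sum>u\<in>Uc G i. pmf \<rho>' u * w)" using r fin pmf_sum1[of "Uc G i" \<rho>'] by (simp add: Ubar_def sum_distrib_right[symmetric])
    also have "\<dots> \<le> (\<Sum>u\<in>Uc G i. pmf \<rho>' u * (\<Sum>v\<in>Vc G i. y v * Z u v))" using yw by (intro sum_mono mult_left_mono) auto
    also have "\<dots> = Qval G J i \<rho>' \<sigma>0" unfolding dbl using s0(2) by (simp cong: sum.cong)
    finally show ?thesis .
  qed
  define S where "S \<rho> = (SUP \<sigma>\<in>Vbar G i. Qval G J i \<rho> \<sigma>)" for \<rho>
  have S_eq: "S \<rho> = Max ((\<lambda>v. Qval G J i \<rho> (return_pmf v)) ` Vc G i)" for \<rho> unfolding S_def by (rule SUP_Max[OF wf i])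
  have S_ge: "Qval G J i \<rho> \<sigma> \<le> S \<rho>" if "\<sigma> \<in> Vbar G i" for \<rho> \<sigma> unfolding S_eq by (rule Qval_le_Max[OF wf i that])
  have S0: "S \<rho>0 \<le> w" unfolding S_eq
    using up fin by (intro Max.boundedI) (auto simp: Vbar_def)
  have Sw: "w \<le> S \<rho>" if "\<rho> \<in> Ubar G i" for \<rho> using lo[OF that] S_ge[OF s0V, of \<rho>] by linarith
  have "Top G J i = S \<rho>0"
    unfolding Top_def S_def[symmetric]
  proof (rule cInf_eq_minimum)
    show "S \<rho>0 \<in> S ` Ubar G i" using r0U by blast
    fix z assume "z \<in> S ` Ubar G i" then show "S \<rho>0 \<le> z" using Sw S0 by fastforce
  qed
  moreover have "w \<le> S \<rho>0" by (rule Sw[OF r0U])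
  ultimately have Tw: "Top G J i = w" using S0 by linarith
  show ?thesis using r0U s0V up lo unfolding Tw by blast
qed

lemma Top_smono: assumes wf: "wf_game G" shows "smono (St G) (Top G)"
  unfolding smono_def
proof (intro allI impI ballI)
  fix J J' :: "nat \<Rightarrow> real" and i assume le: "\<forall>j\<in>St G. J j \<le> J' j" and i: "i \<in> St G"
  obtain \<rho> \<sigma> where rs: "\<rho> \<in> Ubar G i" "\<sigma> \<in> Vbar G i" "\<forall>\<rho>'\<in>Ubar G i. Top G J i \<le> Qval G J i \<rho>' \<sigma>"
    using saddle[OF wf i, of J] by blast
  obtain \<rho>' \<sigma>' where rs': "\<rho>' \<in> Ubar G i" "\<sigma>' \<in> Vbar G i" "\<forall>\<sigma>''\<in>Vbar G i. Qval G J' i \<rho>' \<sigma>'' \<le> Top G J' i"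
    using saddle[OF wf i, of J'] by blast
  have "Top G J i \<le> Qval G J i \<rho>' \<sigma>" using rs(3) rs'(1) by blast
  also have "\<dots> \<le> Qval G J' i \<rho>' \<sigma>" by (rule Qval_mono[OF wf i rs'(1) rs(2)]) (use le in blast)
  also have "\<dots> \<le> Top G J' i" using rs'(3) rs(2) by blast
  finally show "Top G J i \<le> Top G J' i" .
qed

lemma Top_nonexp: assumes wf: "wf_game G" shows "nonexp (St G) (Top G)"
  unfolding nonexp_def
proof (intro allI impI ballI)
  fix J J' :: "nat \<Rightarrow> real" and e i assume le: "\<forall>j\<in>St G. \<bar>J j - J' j\<bar> \<le> e" and i: "i \<in> St G"
  have le': "\<forall>j\<in>St G. \<bar>J' j - J j\<bar> \<le> e" using le by (simp add: abs_minus_commute)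
  obtain \<rho> \<sigma> where rs: "\<rho> \<in> Ubar G i" "\<sigma> \<in> Vbar G i" "\<forall>\<rho>'\<in>Ubar G i. Top G J i \<le> Qval G J i \<rho>' \<sigma>"
     "\<forall>\<sigma>'\<in>Vbar G i. Qval G J i \<rho> \<sigma>' \<le> Top G J i"
    using saddle[OF wf i, of J] by blast
  obtain \<rho>' \<sigma>' where rs': "\<rho>' \<in> Ubar G i" "\<sigma>' \<in> Vbar G i" "\<forall>\<sigma>''\<in>Vbar G i. Qval G J' i \<rho>' \<sigma>'' \<le> Top G J' i"
     "\<forall>\<rho>''\<in>Ubar G i. Top G J' i \<le> Qval G J' i \<rho>'' \<sigma>'"
    using saddle[OF wf i, of J'] by blast
  have a1: "Top G J i \<le> Qval G J i \<rho>' \<sigma>" using rs(3) rs'(1) by blast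
  have a2: "Qval G J' i \<rho>' \<sigma> \<le> Top G J' i" using rs'(3) rs(2) by blast
  have a3: "\<bar>Qval G J i \<rho>' \<sigma> - Qval G J' i \<rho>' \<sigma>\<bar> \<le> e" by (rule Qval_nonexp[OF wf i rs'(1) rs(2)]) (use le in blast)
  have b1: "Top G J' i \<le> Qval G J' i \<rho> \<sigma>'" using rs'(4) rs(1) by blast
  have b2: "Qval G J i \<rho> \<sigma>' \<le> Top G J i" using rs(4) rs'(2) by blast
  have b3: "\<bar>Qval G J' i \<rho> \<sigma>' - Qval G J i \<rho> \<sigma>'\<bar> \<le> e" by (rule Qval_nonexp[OF wf i rs(1) rs'(2)]) (use le' in blast)
  show "\<bar>Top G J i - Top G J' i\<bar> \<le> e" using a1 a2 a3 b1 b2 b3 by linarith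
qed

lemma Top_le_Tmu: assumes wf: "wf_game G" and i: "i \<in> St G" and m: "\<mu> i \<in> Ubar G i"
  shows "Top G J i \<le> Tmu G \<mu> J i"
proof -
  obtain \<sigma> where s: "\<sigma> \<in> Vbar G i" "\<forall>\<rho>'\<in>Ubar G i. Top G J i \<le> Qval G J i \<rho>' \<sigma>"
    using saddle[OF wf i, of J] by blast
  have "Top G J i \<le> Qval G J i (\<mu> i) \<sigma>" using s(2) m by blast
  also have "\<dots> \<le> Tmu G \<mu> J i" by (rule Qval_le_Tmu[OF wf i s(1)])
  finally show ?thesis .
qed

lemma Tnu_le_Top: assumes wf: "wf_game G" and i: "i \<in> St G" and n: "\<nu> i \<in> Vbar G i"
  shows "Tnu G \<nu> J i \<le> Top G J i"
proof -
  obtain \<rho> where r: "\<rho> \<in> Ubar G i" "\<forall>\<sigma>'\<in>Vbar G i. Qval G J i \<rho> \<sigma>' \<le> Top G J i"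
    using saddle[OF wf i, of J] by blast
  have "Tnu G \<nu> J i \<le> Qval G J i \<rho> (\<nu> i)" by (rule Tnu_le_Qval[OF wf i r(1)])
  also have "\<dots> \<le> Top G J i" using r(2) n by blast
  finally show ?thesis .
qed

lemma Tmu_smono: assumes wf: "wf_game G" and m: "\<mu> \<in> SR1 G" shows "smono (St G) (Tmu G \<mu>)"
  unfolding smono_def
proof (intro allI impI ballI)
  fix J J' :: "nat \<Rightarrow> real" and i assume le: "\<forall>j\<in>St G. J j \<le> J' j" and i: "i \<in> St G"
  obtain v where v: "v \<in> Vc G i" "Tmu G \<mu> J i = Qval G J i (\<mu> i) (return_pmf v)" using Tmu_attain[OF wf i] by blast
  have rv: "return_pmf v \<in> Vbar G i" using v(1) by (simp add: Vbar_def)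
  have "Qval G J i (\<mu> i) (return_pmf v) \<le> Qval G J' i (\<mu> i) (return_pmf v)"
    by (rule Qval_mono[OF wf i SR1_Ubar[OF m i] rv]) (use le in blast)
  also have "\<dots> \<le> Tmu G \<mu> J' i" by (rule Qval_le_Tmu[OF wf i rv])
  finally show "Tmu G \<mu> J i \<le> Tmu G \<mu> J' i" using v(2) by simp
qed

lemma Tnu_smono: assumes wf: "wf_game G" and n: "\<nu> \<in> SR2 G" shows "smono (St G) (Tnu G \<nu>)"
  unfolding smono_def
proof (intro allI impI ballI)
  fix J J' :: "nat \<Rightarrow> real" and i assume le: "\<forall>j\<in>St G. J j \<le> J' j" and i: "i \<in> St G"
  obtain u where u: "u \<in> Uc G i" "Tnu G \<nu> J' i = Qval G J' i (return_pmf u) (\<nu> i)" using Tnu_attain[OF wf i] by blast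
  have ru: "return_pmf u \<in> Ubar G i" using u(1) by (simp add: Ubar_def)
  have "Tnu G \<nu> J i \<le> Qval G J i (return_pmf u) (\<nu> i)" by (rule Tnu_le_Qval[OF wf i ru])
  also have "\<dots> \<le> Qval G J' i (return_pmf u) (\<nu> i)"
    by (rule Qval_mono[OF wf i ru SR2_Vbar[OF n i]]) (use le in blast)
  finally show "Tnu G \<nu> J i \<le> Tnu G \<nu> J' i" using u(2) by simp
qed


lemma Jc_le:
  assumes "\<And>k. costN G \<pi>1 \<pi>2 k [] i \<le> a k" "a \<longlonglongrightarrow> L"
  shows "Jc G \<pi>1 \<pi>2 i \<le> ereal L"
proof -
  have "Jc G \<pi>1 \<pi>2 i \<le> liminf (\<lambda>t. ereal (a (Suc t)))"
    unfolding Jc_def by (rule Liminf_mono) (use assms(1) in \<open>simp del: costN.simps\<close>)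
  also have "liminf (\<lambda>t. ereal (a (Suc t))) = ereal L"
    by (rule lim_imp_Liminf) (simp_all add: tendsto_ereal LIMSEQ_Suc[OF assms(2)])
  finally show ?thesis .
qed

lemma Jc_ge:
  assumes "\<And>k. a k \<le> costN G \<pi>1 \<pi>2 k [] i" "a \<longlonglongrightarrow> L"
  shows "ereal L \<le> Jc G \<pi>1 \<pi>2 i"
proof -
  have "ereal L = liminf (\<lambda>t. ereal (a (Suc t)))"
    by (rule lim_imp_Liminf[symmetric]) (simp_all add: tendsto_ereal LIMSEQ_Suc[OF assms(2)])
  also have "\<dots> \<le> Jc G \<pi>1 \<pi>2 i"
    unfolding Jc_def by (rule Liminf_mono) (use assms(1) in \<open>simp del: costN.simps\<close>)
  finally show ?thesis .
qed

lemma Jc_minf: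
  assumes "Jc G \<pi>1 \<pi>2 i = -\<infinity>"
  shows "\<not> bdd_below (range (\<lambda>k. costN G \<pi>1 \<pi>2 k [] i))"
proof
  assume "bdd_below (range (\<lambda>k. costN G \<pi>1 \<pi>2 k [] i))"
  then obtain B where B: "\<And>k. B \<le> costN G \<pi>1 \<pi>2 k [] i" by (auto simp: bdd_below_def)
  have "ereal B \<le> Jc G \<pi>1 \<pi>2 i"
    unfolding Jc_def by (rule Liminf_bounded) (use B in \<open>simp del: costN.simps\<close>)
  then show False using assms by simp
qed

lemma Jc_pinf:
  assumes "Jc G \<pi>1 \<pi>2 i = \<infinity>"
  shows "\<not> bdd_above (range (\<lambda>k. costN G \<pi>1 \<pi>2 k [] i))"
proof
  assume "bdd_above (range (\<lambda>k. costN G \<pi>1 \<pi>2 k [] i))"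
  then obtain B where B: "\<And>k. costN G \<pi>1 \<pi>2 k [] i \<le> B" by (auto simp: bdd_above_def)
  have "Jc G \<pi>1 \<pi>2 i \<le> limsup (\<lambda>t. ereal (costN G \<pi>1 \<pi>2 (Suc t) [] i))"
    unfolding Jc_def by (rule Liminf_le_Limsup) simp
  also have "\<dots> \<le> ereal B" by (rule Limsup_bounded) (use B in \<open>simp del: costN.simps\<close>)
  finally show False using assms by simp
qed

lemma Lop_neg: "(Lop S q (\<lambda>i. - c i) ^^ k) (\<lambda>_. 0) i = - (Lop S q c ^^ k) (\<lambda>_. 0) i"
proof (induction k arbitrary: i)
  case 0 then show ?case by simp
next
  case (Suc k) then show ?case by (simp add: Lop_def sum_negf[symmetric])
qed

lemma Min_neg: "finite A \<Longrightarrow> A \<noteq> {} \<Longrightarrow> Min ((\<lambda>a. - f a) ` A) = - Max (f ` A :: real set)"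
proof -
  assume a: "finite A" "A \<noteq> {}"
  have "Max (f ` A) \<in> f ` A" using a by (intro Max_in) auto
  then obtain a1 where a1: "a1 \<in> A" "Max (f ` A) = f a1" by auto
  have "Min ((\<lambda>a. - f a) ` A) \<in> (\<lambda>a. - f a) ` A" using a by (intro Min_in) auto
  then obtain a2 where a2: "a2 \<in> A" "Min ((\<lambda>a. - f a) ` A) = - f a2" by auto
  have "Min ((\<lambda>a. - f a) ` A) \<le> - f a1" using a a1 by (intro Min_le) auto
  moreover have "f a2 \<le> Max (f ` A)" using a a2 by (intro Max_ge) auto
  ultimately show ?thesis using a1 a2 by linarith
qed

lemma stat_prol:
  "prolonging G (stat \<mu>) (stat \<nu>) \<longleftrightarrow> (\<exists>i\<in>St G. (INF k. surv (St G) (pq G \<mu> \<nu>) k i) > 0)"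
proof -
  have "(INF t. survN G (stat \<mu>) (stat \<nu>) t [] i) = (INF k. surv (St G) (pq G \<mu> \<nu>) k i)" if "i \<in> St G" for i
    using stat_survN[OF that] by simp
  then show ?thesis unfolding prolonging_def by (auto cong: bex_cong)
qed

theorem II_mdp:
  assumes wf: "wf_game G" and m: "\<mu> \<in> SR1 G"
    and M2: "\<exists>J. \<forall>i\<in>St G. J i \<le> Tmu G \<mu> J i"
    and H: "\<forall>\<nu>\<in>SR2 G. prolonging G (stat \<mu>) (stat \<nu>) \<longrightarrow> (\<exists>i\<in>St G. Jc G (stat \<mu>) (stat \<nu>) i = -\<infinity>)"
  shows "\<exists>Js. (\<forall>i\<in>St G. Tmu G \<mu> Js i = Js i) \<and> (\<forall>J. \<forall>i\<in>St G. (\<lambda>k. (Tmu G \<mu> ^^ k) J i) \<longlonglongrightarrow> Js i)"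
proof -
  define q where "q = (\<lambda>i v j. kq G (\<mu> i) (return_pmf v) i j)"
  define c where "c = (\<lambda>i v. - kc G (\<mu> i) (return_pmf v) i)"
  have mdp: "mdp (St G) (Vc G) q"
  proof -
    have "finite (Vc G i) \<and> Vc G i \<noteq> {} \<and> (\<forall>v\<in>Vc G i. (\<forall>j\<in>St G. 0 \<le> q i v j) \<and> (\<Sum>j\<in>St G. q i v j) \<le> 1)"
      if i: "i \<in> St G" for i
    proof -
      have "(\<forall>j\<in>St G. 0 \<le> q i v j) \<and> (\<Sum>j\<in>St G. q i v j) \<le> 1" if v: "v \<in> Vc G i" for v
      proof -
        have rv: "return_pmf v \<in> Vbar G i" using v by (simp add: Vbar_def)
        show ?thesis unfolding q_def using kq_kern[OF wf i SR1_Ubar[OF m i] rv] by blast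
      qed
      then show ?thesis using wfD[OF wf i] by blast
    qed
    then show ?thesis unfolding mdp_def using St_fin by blast
  qed
  have Qa_eq: "Qa (St G) q c J i v = - Qval G (\<lambda>j. - J j) i (\<mu> i) (return_pmf v)" for J i v
    unfolding Qa_def q_def c_def Qval_split by (simp add: sum_negf)
  have Trel: "Tm (St G) (Vc G) q c J i = - Tmu G \<mu> (\<lambda>j. - J j) i" if i: "i \<in> St G" for J i
  proof -
    have "Tm (St G) (Vc G) q c J i = Min ((\<lambda>v. - Qval G (\<lambda>j. - J j) i (\<mu> i) (return_pmf v)) ` Vc G i)"
      unfolding Tm_def Qa_eq ..
    also have "\<dots> = - Max ((\<lambda>v. Qval G (\<lambda>j. - J j) i (\<mu> i) (return_pmf v)) ` Vc G i)"
      by (rule Min_neg) (use wfD[OF wf i] in auto)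
    also have "\<dots> = - Tmu G \<mu> (\<lambda>j. - J j) i" by (simp only: Tmu_Max[OF wf i])
    finally show ?thesis .
  qed
  have M2': "\<exists>J. \<forall>i\<in>St G. Tm (St G) (Vc G) q c J i \<le> J i"
  proof -
    obtain J where J: "\<forall>i\<in>St G. J i \<le> Tmu G \<mu> J i" using M2 by blast
    have "\<forall>i\<in>St G. Tm (St G) (Vc G) q c (\<lambda>j. - J j) i \<le> - J i" using J by (simp add: Trel)
    then show ?thesis by blast
  qed
  have M3: "\<forall>d. (\<forall>i\<in>St G. d i \<in> Vc G i) \<longrightarrow> (\<exists>i\<in>St G. (INF k. surv (St G) (qd q d) k i) > 0) \<longrightarrow>
              (\<exists>i\<in>St G. \<not> bdd_above (range (\<lambda>k. (Lop (St G) (qd q d) (cd c d) ^^ k) (\<lambda>_. 0) i)))"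
  proof (intro allI impI)
    fix d assume d: "\<forall>i\<in>St G. d i \<in> Vc G i" and ex: "\<exists>i\<in>St G. (INF k. surv (St G) (qd q d) k i) > 0"
    define \<nu> where "\<nu> = (\<lambda>i. return_pmf (d i))"
    have nu: "\<nu> \<in> SR2 G" using d by (simp add: SR2_def \<nu>_def)
    have qeq: "qd q d = pq G \<mu> \<nu>" by (simp add: qd_def q_def pq_def \<nu>_def)
    have ceq: "cd c d = (\<lambda>i. - pc G \<mu> \<nu> i)" by (simp add: cd_def c_def pc_def \<nu>_def)
    have "prolonging G (stat \<mu>) (stat \<nu>)" unfolding stat_prol qeq[symmetric] by (rule ex)
    then obtain i where i: "i \<in> St G" "Jc G (stat \<mu>) (stat \<nu>) i = -\<infinity>" using H nu by blast
    have nb: "\<not> bdd_below (range (\<lambda>k. costN G (stat \<mu>) (stat \<nu>) k [] i))" by (rule Jc_minf[OF i(2)])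
    have "\<not> bdd_above (range (\<lambda>k. (Lop (St G) (qd q d) (cd c d) ^^ k) (\<lambda>_. 0) i))"
    proof
      assume "bdd_above (range (\<lambda>k. (Lop (St G) (qd q d) (cd c d) ^^ k) (\<lambda>_. 0) i))"
      then obtain B where B: "\<And>k. (Lop (St G) (qd q d) (cd c d) ^^ k) (\<lambda>_. 0) i \<le> B" by (auto simp: bdd_above_def)
      have "- B \<le> costN G (stat \<mu>) (stat \<nu>) k [] i" for k
        using B[of k] unfolding qeq ceq Lop_neg stat_costN[OF i(1)] by simp
      then have "bdd_below (range (\<lambda>k. costN G (stat \<mu>) (stat \<nu>) k [] i))" by (auto simp: bdd_below_def)
      then show False using nb by simp
    qed
    then show "\<exists>i\<in>St G. \<not> bdd_above (range (\<lambda>k. (Lop (St G) (qd q d) (cd c d) ^^ k) (\<lambda>_. 0) i))" by (rule bexI[OF _ i(1)])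
  qed
  obtain Js where Js: "\<forall>i\<in>St G. Tm (St G) (Vc G) q c Js i = Js i"
      "\<forall>J. \<forall>i\<in>St G. (\<lambda>k. (Tm (St G) (Vc G) q c ^^ k) J i) \<longlonglongrightarrow> Js i"
    using mdp_main[OF mdp M2' M3] by blast
  have sm: "smono (St G) (Tm (St G) (Vc G) q c)" by (rule Tm_smono[OF mdp])
  have Trel2: "Tmu G \<mu> J i = - Tm (St G) (Vc G) q c (\<lambda>j. - J j) i" if i: "i \<in> St G" for J i
    using Trel[OF i, of "\<lambda>j. - J j"] by simp
  have fixp: "Tmu G \<mu> (\<lambda>j. - Js j) i = - Js i" if i: "i \<in> St G" for i
    using Trel2[OF i, of "\<lambda>j. - Js j"] Js(1) i by simp
  have conv: "(\<lambda>k. (Tmu G \<mu> ^^ k) J i) \<longlonglongrightarrow> - Js i" if i: "i \<in> St G" for J i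
  proof -
    have "(\<lambda>k. (Tmu G \<mu> ^^ k) J i) = (\<lambda>k. - (Tm (St G) (Vc G) q c ^^ k) (\<lambda>j. - J j) i)"
      using iter_neg[OF sm Trel2 i] by (rule ext)
    then show ?thesis using tendsto_minus[OF Js(2)[rule_format, OF i]] by simp
  qed
  show ?thesis using fixp conv by (intro exI[of _ "\<lambda>j. - Js j"]) blast
qed

theorem I_mdp:
  assumes wf: "wf_game G" and n: "\<nu> \<in> SR2 G"
    and M2: "\<exists>J. \<forall>i\<in>St G. Tnu G \<nu> J i \<le> J i"
    and H: "\<forall>\<mu>\<in>SR1 G. prolonging G (stat \<mu>) (stat \<nu>) \<longrightarrow> (\<exists>i\<in>St G. Jc G (stat \<mu>) (stat \<nu>) i = \<infinity>)"
  shows "\<exists>Js. (\<forall>i\<in>St G. Tnu G \<nu> Js i = Js i) \<and> (\<forall>J. \<forall>i\<in>St G. (\<lambda>k. (Tnu G \<nu> ^^ k) J i) \<longlonglongrightarrow> Js i)"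
proof -
  define q where "q = (\<lambda>i u j. kq G (return_pmf u) (\<nu> i) i j)"
  define c where "c = (\<lambda>i u. kc G (return_pmf u) (\<nu> i) i)"
  have mdp: "mdp (St G) (Uc G) q"
  proof -
    have "finite (Uc G i) \<and> Uc G i \<noteq> {} \<and> (\<forall>u\<in>Uc G i. (\<forall>j\<in>St G. 0 \<le> q i u j) \<and> (\<Sum>j\<in>St G. q i u j) \<le> 1)"
      if i: "i \<in> St G" for i
    proof -
      have "(\<forall>j\<in>St G. 0 \<le> q i u j) \<and> (\<Sum>j\<in>St G. q i u j) \<le> 1" if u: "u \<in> Uc G i" for u
      proof -
        have ru: "return_pmf u \<in> Ubar G i" using u by (simp add: Ubar_def)
        show ?thesis unfolding q_def using kq_kern[OF wf i ru SR2_Vbar[OF n i]] by blast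
      qed
      then show ?thesis using wfD[OF wf i] by blast
    qed
    then show ?thesis unfolding mdp_def using St_fin by blast
  qed
  have Qa_eq: "Qa (St G) q c J i u = Qval G J i (return_pmf u) (\<nu> i)" for J i u
    unfolding Qa_def q_def c_def Qval_split ..
  have Trel: "Tm (St G) (Uc G) q c J i = Tnu G \<nu> J i" if i: "i \<in> St G" for J i
    unfolding Tm_def Qa_eq Tnu_Min[OF wf i] ..
  have M2': "\<exists>J. \<forall>i\<in>St G. Tm (St G) (Uc G) q c J i \<le> J i" using M2 by (simp add: Trel)
  have M3: "\<forall>d. (\<forall>i\<in>St G. d i \<in> Uc G i) \<longrightarrow> (\<exists>i\<in>St G. (INF k. surv (St G) (qd q d) k i) > 0) \<longrightarrow>
              (\<exists>i\<in>St G. \<not> bdd_above (range (\<lambda>k. (Lop (St G) (qd q d) (cd c d) ^^ k) (\<lambda>_. 0) i)))"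
  proof (intro allI impI)
    fix d assume d: "\<forall>i\<in>St G. d i \<in> Uc G i" and ex: "\<exists>i\<in>St G. (INF k. surv (St G) (qd q d) k i) > 0"
    define \<mu> where "\<mu> = (\<lambda>i. return_pmf (d i))"
    have mu: "\<mu> \<in> SR1 G" using d by (simp add: SR1_def \<mu>_def)
    have qeq: "qd q d = pq G \<mu> \<nu>" by (simp add: qd_def q_def pq_def \<mu>_def)
    have ceq: "cd c d = pc G \<mu> \<nu>" by (simp add: cd_def c_def pc_def \<mu>_def)
    have "prolonging G (stat \<mu>) (stat \<nu>)" unfolding stat_prol qeq[symmetric] by (rule ex)
    then obtain i where i: "i \<in> St G" "Jc G (stat \<mu>) (stat \<nu>) i = \<infinity>" using H mu by blast
    have nb: "\<not> bdd_above (range (\<lambda>k. costN G (stat \<mu>) (stat \<nu>) k [] i))" by (rule Jc_pinf[OF i(2)])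
    have "\<not> bdd_above (range (\<lambda>k. (Lop (St G) (qd q d) (cd c d) ^^ k) (\<lambda>_. 0) i))"
      using nb unfolding qeq ceq stat_costN[OF i(1)] .
    then show "\<exists>i\<in>St G. \<not> bdd_above (range (\<lambda>k. (Lop (St G) (qd q d) (cd c d) ^^ k) (\<lambda>_. 0) i))" by (rule bexI[OF _ i(1)])
  qed
  obtain Js where Js: "\<forall>i\<in>St G. Tm (St G) (Uc G) q c Js i = Js i"
      "\<forall>J. \<forall>i\<in>St G. (\<lambda>k. (Tm (St G) (Uc G) q c ^^ k) J i) \<longlonglongrightarrow> Js i"
    using mdp_main[OF mdp M2' M3] by blast
  have sm: "smono (St G) (Tm (St G) (Uc G) q c)" by (rule Tm_smono[OF mdp])
  have iteq: "(Tnu G \<nu> ^^ k) J i = (Tm (St G) (Uc G) q c ^^ k) J i" if i: "i \<in> St G" for k J i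
    using i
  proof (induction k arbitrary: i)
    case 0 then show ?case by simp
  next
    case (Suc k)
    have "(Tnu G \<nu> ^^ Suc k) J i = Tm (St G) (Uc G) q c ((Tnu G \<nu> ^^ k) J) i" using Trel[OF Suc.prems] by simp
    also have "\<dots> = Tm (St G) (Uc G) q c ((Tm (St G) (Uc G) q c ^^ k) J) i"
      by (rule smono_local[OF sm _ Suc.prems]) (rule Suc.IH)
    finally show ?case by simp
  qed
  show ?thesis using Js Trel iteq by (intro exI[of _ Js]) simp
qed


lemma costN_upper:
  assumes wf: "wf_game G" and m: "\<mu> \<in> SR1 G" and p: "\<pi>2 \<in> Pol2 G" and i: "i \<in> St G"
  shows "costN G (stat \<mu>) \<pi>2 k h i \<le> (Tmu G \<mu> ^^ k) (\<lambda>_. 0) i"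
  using i
proof (induction k arbitrary: h i)
  case 0 then show ?case by simp
next
  case (Suc k)
  let ?W = "(Tmu G \<mu> ^^ k) (\<lambda>_. 0)"
  have sv: "\<pi>2 h i \<in> Vbar G i" using p Suc.prems by (simp add: Pol2_def Vbar_def)
  have "costN G (stat \<mu>) \<pi>2 (Suc k) h i = (\<Sum>u\<in>Uc G i. \<Sum>v\<in>Vc G i. pmf (\<mu> i) u * pmf (\<pi>2 h i) v *
            (gcost G i u v + (\<Sum>j\<in>St G. tp G i u v j * costN G (stat \<mu>) \<pi>2 k (h @ [(i,u,v)]) j)))"
    by (simp only: costN_step[OF Suc.prems] stat_app)
  also have "\<dots> \<le> (\<Sum>u\<in>Uc G i. \<Sum>v\<in>Vc G i. pmf (\<mu> i) u * pmf (\<pi>2 h i) v *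
            (gcost G i u v + (\<Sum>j\<in>St G. tp G i u v j * ?W j)))"
  proof (rule sum_mono, rule sum_mono)
    fix u v assume u: "u \<in> Uc G i" and v: "v \<in> Vc G i"
    have "(\<Sum>j\<in>St G. tp G i u v j * costN G (stat \<mu>) \<pi>2 k (h @ [(i,u,v)]) j) \<le> (\<Sum>j\<in>St G. tp G i u v j * ?W j)"
    proof (rule sum_mono)
      fix j assume j: "j \<in> St G"
      have "0 \<le> tp G i u v j" using wf_tp[OF wf Suc.prems u v] j St_So by blast
      then show "tp G i u v j * costN G (stat \<mu>) \<pi>2 k (h @ [(i,u,v)]) j \<le> tp G i u v j * ?W j"
        using Suc.IH[OF j] by (intro mult_left_mono) auto
    qed
    then show "pmf (\<mu> i) u * pmf (\<pi>2 h i) v * (gcost G i u v + (\<Sum>j\<in>St G. tp G i u v j * costN G (stat \<mu>) \<pi>2 k (h @ [(i,u,v)]) j))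
        \<le> pmf (\<mu> i) u * pmf (\<pi>2 h i) v * (gcost G i u v + (\<Sum>j\<in>St G. tp G i u v j * ?W j))"
      by (intro mult_left_mono add_left_mono) auto
  qed
  also have "\<dots> = Qval G ?W i (\<mu> i) (\<pi>2 h i)" unfolding Qval_def ..
  also have "\<dots> \<le> Tmu G \<mu> ?W i" by (rule Qval_le_Tmu[OF wf Suc.prems sv])
  finally show ?case by simp
qed

lemma costN_lower:
  assumes wf: "wf_game G" and n: "\<nu> \<in> SR2 G" and p: "\<pi>1 \<in> Pol1 G" and i: "i \<in> St G"
  shows "(Tnu G \<nu> ^^ k) (\<lambda>_. 0) i \<le> costN G \<pi>1 (stat \<nu>) k h i"
  using i
proof (induction k arbitrary: h i)
  case 0 then show ?case by simp
next
  case (Suc k)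
  let ?W = "(Tnu G \<nu> ^^ k) (\<lambda>_. 0)"
  have su: "\<pi>1 h i \<in> Ubar G i" using p Suc.prems by (simp add: Pol1_def Ubar_def)
  have "(Tnu G \<nu> ^^ Suc k) (\<lambda>_. 0) i = Tnu G \<nu> ?W i" by simp
  also have "\<dots> \<le> Qval G ?W i (\<pi>1 h i) (\<nu> i)" by (rule Tnu_le_Qval[OF wf Suc.prems su])
  also have "\<dots> = (\<Sum>u\<in>Uc G i. \<Sum>v\<in>Vc G i. pmf (\<pi>1 h i) u * pmf (\<nu> i) v *
            (gcost G i u v + (\<Sum>j\<in>St G. tp G i u v j * ?W j)))" unfolding Qval_def ..
  also have "\<dots> \<le> (\<Sum>u\<in>Uc G i. \<Sum>v\<in>Vc G i. pmf (\<pi>1 h i) u * pmf (\<nu> i) v *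
            (gcost G i u v + (\<Sum>j\<in>St G. tp G i u v j * costN G \<pi>1 (stat \<nu>) k (h @ [(i,u,v)]) j)))"
  proof (rule sum_mono, rule sum_mono)
    fix u v assume u: "u \<in> Uc G i" and v: "v \<in> Vc G i"
    have "(\<Sum>j\<in>St G. tp G i u v j * ?W j) \<le> (\<Sum>j\<in>St G. tp G i u v j * costN G \<pi>1 (stat \<nu>) k (h @ [(i,u,v)]) j)"
    proof (rule sum_mono)
      fix j assume j: "j \<in> St G"
      have "0 \<le> tp G i u v j" using wf_tp[OF wf Suc.prems u v] j St_So by blast
      then show "tp G i u v j * ?W j \<le> tp G i u v j * costN G \<pi>1 (stat \<nu>) k (h @ [(i,u,v)]) j"
        using Suc.IH[OF j] by (intro mult_left_mono) auto
    qed
    then show "pmf (\<pi>1 h i) u * pmf (\<nu> i) v * (gcost G i u v + (\<Sum>j\<in>St G. tp G i u v j * ?W j))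
        \<le> pmf (\<pi>1 h i) u * pmf (\<nu> i) v * (gcost G i u v + (\<Sum>j\<in>St G. tp G i u v j * costN G \<pi>1 (stat \<nu>) k (h @ [(i,u,v)]) j))"
      by (intro mult_left_mono add_left_mono) auto
  qed
  also have "\<dots> = costN G \<pi>1 (stat \<nu>) (Suc k) h i"
    by (simp only: costN_step[OF Suc.prems] stat_app)
  finally show ?case .
qed

lemma Lop_pq: "Lop (St G) (pq G \<mu> \<nu>) (pc G \<mu> \<nu>) J i = Qval G J i (\<mu> i) (\<nu> i)"
  by (simp add: Lop_def pq_def pc_def Qval_split)

lemma stat_Pol1: "\<mu> \<in> SR1 G \<Longrightarrow> stat \<mu> \<in> Pol1 G" by (simp add: SR1_def Pol1_def stat_def)
lemma stat_Pol2: "\<nu> \<in> SR2 G \<Longrightarrow> stat \<nu> \<in> Pol2 G" by (simp add: SR2_def Pol2_def stat_def)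

lemma Jc_stat_upper:
  assumes wf: "wf_game G" and m: "\<mu> \<in> SR1 G" and n: "\<nu> \<in> SR2 G" and J: "\<forall>i\<in>St G. Tmu G \<mu> J i \<le> J i" and i: "i \<in> St G"
  shows "Jc G (stat \<mu>) (stat \<nu>) i \<noteq> \<infinity>"
proof -
  have "Lop (St G) (pq G \<mu> \<nu>) (pc G \<mu> \<nu>) J j \<le> J j" if j: "j \<in> St G" for j
    unfolding Lop_pq using Qval_le_Tmu[OF wf j SR2_Vbar[OF n j], of J \<mu>] J j by force
  then obtain B where B: "\<forall>k. \<forall>j\<in>St G. (Lop (St G) (pq G \<mu> \<nu>) (pc G \<mu> \<nu>) ^^ k) (\<lambda>_. 0) j \<le> J j + B"
    using chain_bdd_above[OF pq_kern[OF wf m n]] by blast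
  have "Jc G (stat \<mu>) (stat \<nu>) i \<le> ereal (J i + B)"
    by (rule Jc_le[where a="\<lambda>_. J i + B"]) (use B i in \<open>simp_all add: stat_costN\<close>)
  then show ?thesis by auto
qed

lemma Jc_stat_lower:
  assumes wf: "wf_game G" and m: "\<mu> \<in> SR1 G" and n: "\<nu> \<in> SR2 G" and J: "\<forall>i\<in>St G. J i \<le> Tnu G \<nu> J i" and i: "i \<in> St G"
  shows "Jc G (stat \<mu>) (stat \<nu>) i \<noteq> -\<infinity>"
proof -
  have "J j \<le> Lop (St G) (pq G \<mu> \<nu>) (pc G \<mu> \<nu>) J j" if j: "j \<in> St G" for j
    unfolding Lop_pq using Tnu_le_Qval[OF wf j SR1_Ubar[OF m j], of \<nu> J] J j by force
  then obtain B where B: "\<forall>k. \<forall>j\<in>St G. J j - B \<le> (Lop (St G) (pq G \<mu> \<nu>) (pc G \<mu> \<nu>) ^^ k) (\<lambda>_. 0) j"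
    using chain_bdd_below[OF pq_kern[OF wf m n]] by blast
  have "ereal (J i - B) \<le> Jc G (stat \<mu>) (stat \<nu>) i"
    by (rule Jc_ge[where a="\<lambda>_. J i - B"]) (use B i in \<open>simp_all add: stat_costN\<close>)
  then show ?thesis by auto
qed


lemma assm3: "ssp_model_assumption G \<Longrightarrow> \<mu> \<in> SR1 G \<Longrightarrow> \<nu> \<in> SR2 G \<Longrightarrow> prolonging G (stat \<mu>) (stat \<nu>) \<Longrightarrow>
    \<exists>i\<in>St G. Jc G (stat \<mu>) (stat \<nu>) i = \<infinity> \<or> Jc G (stat \<mu>) (stat \<nu>) i = -\<infinity>"
  unfolding ssp_model_assumption_def by blast

lemma good_pair:
  assumes wf: "wf_game G" and A: "ssp_model_assumption G"
    and fixJ: "\<forall>i\<in>St G. Top G Js i = Js i"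
    and m: "\<mu> \<in> SR1 G" and n: "\<nu> \<in> SR2 G"
    and hm: "\<forall>i\<in>St G. Tmu G \<mu> Js i = Top G Js i" and hn: "\<forall>i\<in>St G. Tnu G \<nu> Js i = Top G Js i"
  shows "(\<forall>i\<in>St G. Jc G (stat \<mu>) (stat \<nu>) i = ereal (Js i)) \<and>
         (\<forall>J :: nat \<Rightarrow> real. (\<forall>i\<in>St G. J i = Top G J i) \<longrightarrow> (\<forall>i\<in>St G. J i = Js i)) \<and>
         optimal1 G (stat \<mu>) \<and> optimal2 G (stat \<nu>) \<and>
         ess_proper1 G \<mu> \<and> ess_proper2 G \<nu> \<and>
         \<not> prolonging G (stat \<mu>) (stat \<nu>) \<and>
         equilibrium G (stat \<mu>) (stat \<nu>)"
proof -
  have fm: "\<forall>i\<in>St G. Tmu G \<mu> Js i = Js i" using hm fixJ by simp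
  have fn: "\<forall>i\<in>St G. Tnu G \<nu> Js i = Js i" using hn fixJ by simp
  have smm: "smono (St G) (Tmu G \<mu>)" by (rule Tmu_smono[OF wf m])
  have smn: "smono (St G) (Tnu G \<nu>)" by (rule Tnu_smono[OF wf n])
  have Hm: "\<forall>\<nu>'\<in>SR2 G. prolonging G (stat \<mu>) (stat \<nu>') \<longrightarrow> (\<exists>i\<in>St G. Jc G (stat \<mu>) (stat \<nu>') i = -\<infinity>)"
  proof (intro ballI impI)
    fix \<nu>' assume n': "\<nu>' \<in> SR2 G" and p: "prolonging G (stat \<mu>) (stat \<nu>')"
    obtain i where i: "i \<in> St G" "Jc G (stat \<mu>) (stat \<nu>') i = \<infinity> \<or> Jc G (stat \<mu>) (stat \<nu>') i = -\<infinity>"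
      using assm3[OF A m n' p] by blast
    have "Jc G (stat \<mu>) (stat \<nu>') i \<noteq> \<infinity>" by (rule Jc_stat_upper[OF wf m n' _ i(1), where J=Js]) (use fm in simp)
    then show "\<exists>i\<in>St G. Jc G (stat \<mu>) (stat \<nu>') i = -\<infinity>" using i by blast
  qed
  have "\<exists>J. \<forall>i\<in>St G. J i \<le> Tmu G \<mu> J i" using fm by (intro exI[of _ Js]) simp
  then obtain Jm where Jm: "\<forall>i\<in>St G. Tmu G \<mu> Jm i = Jm i" "\<forall>J. \<forall>i\<in>St G. (\<lambda>k. (Tmu G \<mu> ^^ k) J i) \<longlonglongrightarrow> Jm i"
    using II_mdp[OF wf m _ Hm] by blast
  have convm: "(\<lambda>k. (Tmu G \<mu> ^^ k) J i) \<longlonglongrightarrow> Js i" if i: "i \<in> St G" for J i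
  proof -
    have c2: "(\<lambda>k. (Tmu G \<mu> ^^ k) Js i) = (\<lambda>k. Js i)" using smono_fix[OF smm _ i, of Js] fm by simp
    have c1: "(\<lambda>k. (Tmu G \<mu> ^^ k) Js i) \<longlonglongrightarrow> Jm i" using Jm(2) i by blast
    have "Jm i = Js i" using LIMSEQ_unique[OF c1[unfolded c2] tendsto_const] .
    moreover have "(\<lambda>k. (Tmu G \<mu> ^^ k) J i) \<longlonglongrightarrow> Jm i" using Jm(2) i by blast
    ultimately show ?thesis by simp
  qed
  have Hn: "\<forall>\<mu>'\<in>SR1 G. prolonging G (stat \<mu>') (stat \<nu>) \<longrightarrow> (\<exists>i\<in>St G. Jc G (stat \<mu>') (stat \<nu>) i = \<infinity>)"
  proof (intro ballI impI)
    fix \<mu>' assume m': "\<mu>' \<in> SR1 G" and p: "prolonging G (stat \<mu>') (stat \<nu>)"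
    obtain i where i: "i \<in> St G" "Jc G (stat \<mu>') (stat \<nu>) i = \<infinity> \<or> Jc G (stat \<mu>') (stat \<nu>) i = -\<infinity>"
      using assm3[OF A m' n p] by blast
    have "Jc G (stat \<mu>') (stat \<nu>) i \<noteq> -\<infinity>" by (rule Jc_stat_lower[OF wf m' n _ i(1), where J=Js]) (use fn in simp)
    then show "\<exists>i\<in>St G. Jc G (stat \<mu>') (stat \<nu>) i = \<infinity>" using i by blast
  qed
  have "\<exists>J. \<forall>i\<in>St G. Tnu G \<nu> J i \<le> J i" using fn by (intro exI[of _ Js]) simp
  then obtain Jn where Jn: "\<forall>i\<in>St G. Tnu G \<nu> Jn i = Jn i" "\<forall>J. \<forall>i\<in>St G. (\<lambda>k. (Tnu G \<nu> ^^ k) J i) \<longlonglongrightarrow> Jn i"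
    using I_mdp[OF wf n _ Hn] by blast
  have convn: "(\<lambda>k. (Tnu G \<nu> ^^ k) J i) \<longlonglongrightarrow> Js i" if i: "i \<in> St G" for J i
  proof -
    have c2: "(\<lambda>k. (Tnu G \<nu> ^^ k) Js i) = (\<lambda>k. Js i)" using smono_fix[OF smn _ i, of Js] fn by simp
    have c1: "(\<lambda>k. (Tnu G \<nu> ^^ k) Js i) \<longlonglongrightarrow> Jn i" using Jn(2) i by blast
    have "Jn i = Js i" using LIMSEQ_unique[OF c1[unfolded c2] tendsto_const] .
    moreover have "(\<lambda>k. (Tnu G \<nu> ^^ k) J i) \<longlonglongrightarrow> Jn i" using Jn(2) i by blast
    ultimately show ?thesis by simp
  qed
  have up: "Jc G (stat \<mu>) \<pi>2 i \<le> ereal (Js i)" if p: "\<pi>2 \<in> Pol2 G" and i: "i \<in> St G" for \<pi>2 i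
    by (rule Jc_le[OF costN_upper[OF wf m p i] convm[OF i]])
  have lo: "ereal (Js i) \<le> Jc G \<pi>1 (stat \<nu>) i" if p: "\<pi>1 \<in> Pol1 G" and i: "i \<in> St G" for \<pi>1 i
    by (rule Jc_ge[OF costN_lower[OF wf n p i] convn[OF i]])
  have pm: "stat \<mu> \<in> Pol1 G" by (rule stat_Pol1[OF m])
  have pn: "stat \<nu> \<in> Pol2 G" by (rule stat_Pol2[OF n])
  have eq: "Jc G (stat \<mu>) (stat \<nu>) i = ereal (Js i)" if i: "i \<in> St G" for i
    using up[OF pn i] lo[OF pm i] by (rule antisym)
  have uniq: "J i = Js i" if J: "\<forall>i\<in>St G. J i = Top G J i" and i: "i \<in> St G" for J :: "nat \<Rightarrow> real" and i
  proof (rule antisym)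
    have "J j \<le> Tmu G \<mu> J j" if j: "j \<in> St G" for j
      using Top_le_Tmu[OF wf j, where \<mu>=\<mu> and J=J] SR1_Ubar[OF m j] J j by simp
    then have "J i \<le> (Tmu G \<mu> ^^ k) J i" for k by (rule smono_iter_ge[OF smm _ i])
    then show "J i \<le> Js i" by (intro LIMSEQ_le_const[OF convm[OF i]]) auto
  next
    have "Tnu G \<nu> J j \<le> J j" if j: "j \<in> St G" for j
      using Tnu_le_Top[OF wf j, where \<nu>=\<nu> and J=J] SR2_Vbar[OF n j] J j by simp
    then have "(Tnu G \<nu> ^^ k) J i \<le> J i" for k by (rule smono_iter_le[OF smn _ i])
    then show "Js i \<le> J i" by (intro LIMSEQ_le_const2[OF convn[OF i]]) auto
  qed
  have equil: "equilibrium G (stat \<mu>) (stat \<nu>)"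
    unfolding equilibrium_def using up lo eq by simp
  have nprol: "\<not> prolonging G (stat \<mu>) (stat \<nu>)"
  proof
    assume "prolonging G (stat \<mu>) (stat \<nu>)"
    then obtain i where "i \<in> St G" "Jc G (stat \<mu>) (stat \<nu>) i = \<infinity> \<or> Jc G (stat \<mu>) (stat \<nu>) i = -\<infinity>"
      using assm3[OF A m n] by blast
    then show False using eq by auto
  qed
  have ep1: "ess_proper1 G \<mu>"
    unfolding ess_proper1_def
  proof (intro conjI ballI impI)
    show "\<mu> \<in> SR1 G" by (rule m)
    show "\<exists>\<nu>\<in>SR2 G. \<not> prolonging G (stat \<mu>) (stat \<nu>)" using n nprol by blast
    fix \<nu>' assume n': "\<nu>' \<in> SR2 G" and p: "prolonging G (stat \<mu>) (stat \<nu>')"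
    obtain i where i: "i \<in> St G" "Jc G (stat \<mu>) (stat \<nu>') i = \<infinity> \<or> Jc G (stat \<mu>) (stat \<nu>') i = -\<infinity>"
      using assm3[OF A m n' p] by blast
    have "Jc G (stat \<mu>) (stat \<nu>') i \<le> ereal (Js i)" by (rule up[OF stat_Pol2[OF n'] i(1)])
    then show "\<exists>i\<in>St G. Jc G (stat \<mu>) (stat \<nu>') i = -\<infinity>" using i by auto
  qed
  have ep2: "ess_proper2 G \<nu>"
    unfolding ess_proper2_def
  proof (intro conjI ballI impI)
    show "\<nu> \<in> SR2 G" by (rule n)
    show "\<exists>\<mu>\<in>SR1 G. \<not> prolonging G (stat \<mu>) (stat \<nu>)" using m nprol by blast
    fix \<mu>' assume m': "\<mu>' \<in> SR1 G" and p: "prolonging G (stat \<mu>') (stat \<nu>)"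
    obtain i where i: "i \<in> St G" "Jc G (stat \<mu>') (stat \<nu>) i = \<infinity> \<or> Jc G (stat \<mu>') (stat \<nu>) i = -\<infinity>"
      using assm3[OF A m' n p] by blast
    have "ereal (Js i) \<le> Jc G (stat \<mu>') (stat \<nu>) i" by (rule lo[OF stat_Pol1[OF m'] i(1)])
    then show "\<exists>i\<in>St G. Jc G (stat \<mu>') (stat \<nu>) i = \<infinity>" using i by auto
  qed
  have opt1: "optimal1 G (stat \<mu>)"
    unfolding optimal1_def
  proof
    fix i assume i: "i \<in> St G"
    have s1: "(SUP \<pi>2\<in>Pol2 G. Jc G (stat \<mu>) \<pi>2 i) = ereal (Js i)"
    proof (rule antisym)
      show "(SUP \<pi>2\<in>Pol2 G. Jc G (stat \<mu>) \<pi>2 i) \<le> ereal (Js i)" using up i by (auto intro: SUP_least)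
      show "ereal (Js i) \<le> (SUP \<pi>2\<in>Pol2 G. Jc G (stat \<mu>) \<pi>2 i)" using eq[OF i] pn by (auto intro: SUP_upper2)
    qed
    have s2: "(INF \<pi>1'\<in>Pol1 G. SUP \<pi>2\<in>Pol2 G. Jc G \<pi>1' \<pi>2 i) = ereal (Js i)"
    proof (rule antisym)
      show "(INF \<pi>1'\<in>Pol1 G. SUP \<pi>2\<in>Pol2 G. Jc G \<pi>1' \<pi>2 i) \<le> ereal (Js i)"
        using s1 pm by (auto intro: INF_lower2)
      show "ereal (Js i) \<le> (INF \<pi>1'\<in>Pol1 G. SUP \<pi>2\<in>Pol2 G. Jc G \<pi>1' \<pi>2 i)"
      proof (rule INF_greatest)
        fix \<pi>1' assume p: "\<pi>1' \<in> Pol1 G"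
        have "ereal (Js i) \<le> Jc G \<pi>1' (stat \<nu>) i" by (rule lo[OF p i])
        also have "\<dots> \<le> (SUP \<pi>2\<in>Pol2 G. Jc G \<pi>1' \<pi>2 i)" using pn by (rule SUP_upper)
        finally show "ereal (Js i) \<le> (SUP \<pi>2\<in>Pol2 G. Jc G \<pi>1' \<pi>2 i)" .
      qed
    qed
    show "(SUP \<pi>2\<in>Pol2 G. Jc G (stat \<mu>) \<pi>2 i) = (INF \<pi>1'\<in>Pol1 G. SUP \<pi>2\<in>Pol2 G. Jc G \<pi>1' \<pi>2 i)"
      using s1 s2 by simp
  qed
  have opt2: "optimal2 G (stat \<nu>)"
    unfolding optimal2_def
  proof
    fix i assume i: "i \<in> St G"
    have s1: "(INF \<pi>1\<in>Pol1 G. Jc G \<pi>1 (stat \<nu>) i) = ereal (Js i)"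
    proof (rule antisym)
      show "(INF \<pi>1\<in>Pol1 G. Jc G \<pi>1 (stat \<nu>) i) \<le> ereal (Js i)" using eq[OF i] pm by (auto intro: INF_lower2)
      show "ereal (Js i) \<le> (INF \<pi>1\<in>Pol1 G. Jc G \<pi>1 (stat \<nu>) i)" using lo i by (auto intro: INF_greatest)
    qed
    have s2: "(SUP \<pi>2'\<in>Pol2 G. INF \<pi>1\<in>Pol1 G. Jc G \<pi>1 \<pi>2' i) = ereal (Js i)"
    proof (rule antisym)
      show "(SUP \<pi>2'\<in>Pol2 G. INF \<pi>1\<in>Pol1 G. Jc G \<pi>1 \<pi>2' i) \<le> ereal (Js i)"
      proof (rule SUP_least)
        fix \<pi>2' assume p: "\<pi>2' \<in> Pol2 G"
        have "(INF \<pi>1\<in>Pol1 G. Jc G \<pi>1 \<pi>2' i) \<le> Jc G (stat \<mu>) \<pi>2' i" using pm by (rule INF_lower)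
        also have "\<dots> \<le> ereal (Js i)" by (rule up[OF p i])
        finally show "(INF \<pi>1\<in>Pol1 G. Jc G \<pi>1 \<pi>2' i) \<le> ereal (Js i)" .
      qed
      show "ereal (Js i) \<le> (SUP \<pi>2'\<in>Pol2 G. INF \<pi>1\<in>Pol1 G. Jc G \<pi>1 \<pi>2' i)"
        using s1 pn by (auto intro: SUP_upper2)
    qed
    show "(INF \<pi>1\<in>Pol1 G. Jc G \<pi>1 (stat \<nu>) i) = (SUP \<pi>2'\<in>Pol2 G. INF \<pi>1\<in>Pol1 G. Jc G \<pi>1 \<pi>2' i)"
      using s1 s2 by simp
  qed
  show ?thesis using eq uniq opt1 opt2 ep1 ep2 nprol equil by blast
qed


lemma exists_fix:
  assumes wf: "wf_game G" and A: "ssp_model_assumption G"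
  shows "\<exists>Js. \<forall>i\<in>St G. Top G Js i = Js i"
proof -
  obtain \<mu>b where mb: "\<mu>b \<in> SR1 G" and A1: "\<forall>\<nu>\<in>SR2 G. \<forall>i\<in>St G. Jc G (stat \<mu>b) (stat \<nu>) i < \<infinity>"
    using A unfolding ssp_model_assumption_def by blast
  obtain \<nu>b where nb: "\<nu>b \<in> SR2 G" and A2: "\<forall>\<mu>\<in>SR1 G. \<forall>i\<in>St G. Jc G (stat \<mu>) (stat \<nu>b) i > -\<infinity>"
    using A unfolding ssp_model_assumption_def by blast
  have np: "\<not> prolonging G (stat \<mu>b) (stat \<nu>b)"
  proof
    assume "prolonging G (stat \<mu>b) (stat \<nu>b)"
    then obtain i where i: "i \<in> St G" "Jc G (stat \<mu>b) (stat \<nu>b) i = \<infinity> \<or> Jc G (stat \<mu>b) (stat \<nu>b) i = -\<infinity>"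
      using assm3[OF A mb nb] by blast
    then show False using A1 nb A2 mb by fastforce
  qed
  then have "\<forall>i\<in>St G. (INF k. surv (St G) (pq G \<mu>b \<nu>b) k i) \<le> 0"
    unfolding stat_prol by (auto simp: not_less)
  then obtain J0 where J0: "\<forall>i\<in>St G. Lop (St G) (pq G \<mu>b \<nu>b) (pc G \<mu>b \<nu>b) J0 i = J0 i"
    using chain_conv[OF pq_kern[OF wf mb nb]] by blast
  have J0Q: "Qval G J0 i (\<mu>b i) (\<nu>b i) = J0 i" if "i \<in> St G" for i using J0 that by (simp add: Lop_pq)
  have M2m: "\<exists>J. \<forall>i\<in>St G. J i \<le> Tmu G \<mu>b J i"
  proof (intro exI ballI)
    fix i assume i: "i \<in> St G"
    show "J0 i \<le> Tmu G \<mu>b J0 i" using Qval_le_Tmu[OF wf i SR2_Vbar[OF nb i], of J0 \<mu>b] J0Q[OF i] by simp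
  qed
  have Hm: "\<forall>\<nu>\<in>SR2 G. prolonging G (stat \<mu>b) (stat \<nu>) \<longrightarrow> (\<exists>i\<in>St G. Jc G (stat \<mu>b) (stat \<nu>) i = -\<infinity>)"
  proof (intro ballI impI)
    fix \<nu> assume n: "\<nu> \<in> SR2 G" and p: "prolonging G (stat \<mu>b) (stat \<nu>)"
    obtain i where i: "i \<in> St G" "Jc G (stat \<mu>b) (stat \<nu>) i = \<infinity> \<or> Jc G (stat \<mu>b) (stat \<nu>) i = -\<infinity>"
      using assm3[OF A mb n p] by blast
    then show "\<exists>i\<in>St G. Jc G (stat \<mu>b) (stat \<nu>) i = -\<infinity>" using A1 n by fastforce
  qed
  obtain J1 where J1: "\<forall>i\<in>St G. Tmu G \<mu>b J1 i = J1 i"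
    using II_mdp[OF wf mb M2m Hm] by blast
  have M2n: "\<exists>J. \<forall>i\<in>St G. Tnu G \<nu>b J i \<le> J i"
  proof (intro exI ballI)
    fix i assume i: "i \<in> St G"
    show "Tnu G \<nu>b J0 i \<le> J0 i" using Tnu_le_Qval[OF wf i SR1_Ubar[OF mb i], of \<nu>b J0] J0Q[OF i] by simp
  qed
  have Hn: "\<forall>\<mu>\<in>SR1 G. prolonging G (stat \<mu>) (stat \<nu>b) \<longrightarrow> (\<exists>i\<in>St G. Jc G (stat \<mu>) (stat \<nu>b) i = \<infinity>)"
  proof (intro ballI impI)
    fix \<mu> assume m: "\<mu> \<in> SR1 G" and p: "prolonging G (stat \<mu>) (stat \<nu>b)"
    obtain i where i: "i \<in> St G" "Jc G (stat \<mu>) (stat \<nu>b) i = \<infinity> \<or> Jc G (stat \<mu>) (stat \<nu>b) i = -\<infinity>"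
      using assm3[OF A m nb p] by blast
    then show "\<exists>i\<in>St G. Jc G (stat \<mu>) (stat \<nu>b) i = \<infinity>" using A2 m by fastforce
  qed
  obtain J2 where J2: "\<forall>J. \<forall>i\<in>St G. (\<lambda>k. (Tnu G \<nu>b ^^ k) J i) \<longlonglongrightarrow> J2 i"
    using I_mdp[OF wf nb M2n Hn] by blast
  have smT: "smono (St G) (Top G)" by (rule Top_smono[OF wf])
  have neT: "nonexp (St G) (Top G)" by (rule Top_nonexp[OF wf])
  have dec: "Top G J1 i \<le> J1 i" if i: "i \<in> St G" for i
    using Top_le_Tmu[OF wf i, where \<mu>=\<mu>b and J=J1] SR1_Ubar[OF mb i] J1 i by simp
  define U where "U i = (INF k. (Tnu G \<nu>b ^^ k) J1 i)" for i
  have lb: "U i \<le> (Top G ^^ k) J1 i" if i: "i \<in> St G" for k i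
  proof -
    have "(\<lambda>k. (Tnu G \<nu>b ^^ k) J1 i) \<longlonglongrightarrow> J2 i" using J2 i by blast
    then have "bdd_below (range (\<lambda>k. (Tnu G \<nu>b ^^ k) J1 i))"
      by (intro bounded_imp_bdd_below convergent_imp_bounded)
    then have "U i \<le> (Tnu G \<nu>b ^^ k) J1 i" unfolding U_def by (intro cINF_lower) auto
    also have "\<dots> \<le> (Top G ^^ k) J1 i"
      by (rule iter_le_iter[OF smT _ i]) (use Tnu_le_Top[OF wf] SR2_Vbar[OF nb] in blast)
    finally show ?thesis .
  qed
  obtain L where "\<forall>i\<in>St G. Top G L i = L i" using iter_dec_fix[OF St_fin smT neT dec lb] by blast
  then show ?thesis by blast
qed

theorem proposition3p1:
  fixes G :: "('u,'v) ssp_game"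
  assumes "wf_game G"
    and "ssp_model_assumption G"
  shows "\<exists>\<mu>s\<in>SR1 G. \<exists>\<nu>s\<in>SR2 G.
           equilibrium G (stat \<mu>s) (stat \<nu>s) \<and>
           (\<exists>Js :: nat \<Rightarrow> real.
              (\<forall>i\<in>St G. Jc G (stat \<mu>s) (stat \<nu>s) i = ereal (Js i)) \<and>
              (\<forall>i\<in>St G. Js i = Top G Js i) \<and>
              (\<forall>J :: nat \<Rightarrow> real. (\<forall>i\<in>St G. J i = Top G J i) \<longrightarrow> (\<forall>i\<in>St G. J i = Js i)) \<and>
              (\<forall>\<mu>\<in>SR1 G. \<forall>\<nu>\<in>SR2 G.
                 (\<forall>i\<in>St G. Tmu G \<mu> Js i = Top G Js i) \<and>
                 (\<forall>i\<in>St G. Tnu G \<nu> Js i = Top G Js i) \<longrightarrow>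
                   optimal1 G (stat \<mu>) \<and> optimal2 G (stat \<nu>) \<and>
                   ess_proper1 G \<mu> \<and> ess_proper2 G \<nu> \<and>
                   \<not> prolonging G (stat \<mu>) (stat \<nu>) \<and>
                   equilibrium G (stat \<mu>) (stat \<nu>)))"
proof -
  note wf = assms(1) and A = assms(2)
  obtain Js where fixJ: "\<forall>i\<in>St G. Top G Js i = Js i" using exists_fix[OF wf A] by blast
  define P1 where "P1 i \<rho> \<longleftrightarrow> \<rho> \<in> Ubar G i \<and> (\<forall>\<sigma>'\<in>Vbar G i. Qval G Js i \<rho> \<sigma>' \<le> Top G Js i)" for i \<rho>
  define P2 where "P2 i \<sigma> \<longleftrightarrow> \<sigma> \<in> Vbar G i \<and> (\<forall>\<rho>'\<in>Ubar G i. Top G Js i \<le> Qval G Js i \<rho>' \<sigma>)" for i \<sigma>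
  define \<mu>s where "\<mu>s i = (SOME \<rho>. P1 i \<rho>)" for i
  define \<nu>s where "\<nu>s i = (SOME \<sigma>. P2 i \<sigma>)" for i
  have p1: "P1 i (\<mu>s i)" if i: "i \<in> St G" for i
  proof -
    have "\<exists>\<rho>. P1 i \<rho>" using saddle[OF wf i, of Js] unfolding P1_def by blast
    then show ?thesis unfolding \<mu>s_def by (rule someI_ex)
  qed
  have p2: "P2 i (\<nu>s i)" if i: "i \<in> St G" for i
  proof -
    have "\<exists>\<sigma>. P2 i \<sigma>" using saddle[OF wf i, of Js] unfolding P2_def by blast
    then show ?thesis unfolding \<nu>s_def by (rule someI_ex)
  qed
  have ms: "\<mu>s \<in> SR1 G" using p1 by (simp add: SR1_def P1_def Ubar_def)
  have ns: "\<nu>s \<in> SR2 G" using p2 by (simp add: SR2_def P2_def Vbar_def)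
  have hm: "\<forall>i\<in>St G. Tmu G \<mu>s Js i = Top G Js i"
  proof
    fix i assume i: "i \<in> St G"
    obtain v where v: "v \<in> Vc G i" "Tmu G \<mu>s Js i = Qval G Js i (\<mu>s i) (return_pmf v)" using Tmu_attain[OF wf i] by blast
    have "return_pmf v \<in> Vbar G i" using v(1) by (simp add: Vbar_def)
    then have "Tmu G \<mu>s Js i \<le> Top G Js i" using p1[OF i] v(2) unfolding P1_def by simp
    moreover have "Top G Js i \<le> Tmu G \<mu>s Js i" using Top_le_Tmu[OF wf i, where \<mu>=\<mu>s and J=Js] p1[OF i] by (simp add: P1_def)
    ultimately show "Tmu G \<mu>s Js i = Top G Js i" by simp
  qed
  have hn: "\<forall>i\<in>St G. Tnu G \<nu>s Js i = Top G Js i"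
  proof
    fix i assume i: "i \<in> St G"
    obtain u where u: "u \<in> Uc G i" "Tnu G \<nu>s Js i = Qval G Js i (return_pmf u) (\<nu>s i)" using Tnu_attain[OF wf i] by blast
    have "return_pmf u \<in> Ubar G i" using u(1) by (simp add: Ubar_def)
    then have "Top G Js i \<le> Tnu G \<nu>s Js i" using p2[OF i] u(2) unfolding P2_def by simp
    moreover have "Tnu G \<nu>s Js i \<le> Top G Js i" using Tnu_le_Top[OF wf i, where \<nu>=\<nu>s and J=Js] p2[OF i] by (simp add: P2_def)
    ultimately show "Tnu G \<nu>s Js i = Top G Js i" by simp
  qed
  have gp: "(\<forall>i\<in>St G. Jc G (stat \<mu>s) (stat \<nu>s) i = ereal (Js i)) \<and>
         (\<forall>J :: nat \<Rightarrow> real. (\<forall>i\<in>St G. J i = Top G J i) \<longrightarrow> (\<forall>i\<in>St G. J i = Js i)) \<and>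
         equilibrium G (stat \<mu>s) (stat \<nu>s)"
    using good_pair[OF wf A fixJ ms ns hm hn] by blast
  have all: "\<forall>\<mu>\<in>SR1 G. \<forall>\<nu>\<in>SR2 G.
                 (\<forall>i\<in>St G. Tmu G \<mu> Js i = Top G Js i) \<and>
                 (\<forall>i\<in>St G. Tnu G \<nu> Js i = Top G Js i) \<longrightarrow>
                   optimal1 G (stat \<mu>) \<and> optimal2 G (stat \<nu>) \<and>
                   ess_proper1 G \<mu> \<and> ess_proper2 G \<nu> \<and>
                   \<not> prolonging G (stat \<mu>) (stat \<nu>) \<and>
                   equilibrium G (stat \<mu>) (stat \<nu>)"
  proof (intro ballI impI)
    fix \<mu> \<nu> assume m: "\<mu> \<in> SR1 G" and n: "\<nu> \<in> SR2 G"
      and h: "(\<forall>i\<in>St G. Tmu G \<mu> Js i = Top G Js i) \<and> (\<forall>i\<in>St G. Tnu G \<nu> Js i = Top G Js i)"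
    show "optimal1 G (stat \<mu>) \<and> optimal2 G (stat \<nu>) \<and> ess_proper1 G \<mu> \<and> ess_proper2 G \<nu> \<and>
          \<not> prolonging G (stat \<mu>) (stat \<nu>) \<and> equilibrium G (stat \<mu>) (stat \<nu>)"
      using good_pair[OF wf A fixJ m n] h by blast
  qed
  have fixJ': "\<forall>i\<in>St G. Js i = Top G Js i" using fixJ by simp
  show ?thesis using ms ns gp fixJ' all by blast
qed


end
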